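(* Let $\{\hat f_n\}_{n\in\mathbb N}\subset L_0(\hat\nabla,\hat\mu)$ with representing sections $\omega\mapsto f_n(\omega)$. (1) If $\hat f_n\xrightarrow{(o)}\hat f$ in $L_0(\hat\nabla,\hat\mu)$ for some $\hat f\in L_0(\hat\nabla,\hat\mu)$ (with representing section $\omega\mapsto f(\omega)$), then $f_n(\omega)\xrightarrow{(o)} f(\omega)$ in $L_0(\nabla_\omega,\mu_\omega)$ for $\lambda$-almost every $\omega\in\Omega$. (2) Conversely, if for $\lambda$-almost every $\omega\in\Omega$ there is $g(\omega)\in L_0(\nabla_\omega,\mu_\omega)$ with $f_n(\omega)\xrightarrow{(o)} g(\omega)$ in $L_0(\nabla_\omega,\mu_\omega)$, then the section $\omega\mapsto g(\omega)$ defines an element $\hat g\in L_0(\hat\nabla,\hat\mu)$ and $\hat f_n\xrightarrow{(o)}\hat g$ in $L_0(\hat\nabla,\hat\mu)$.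
   Context: $(\Omega,\Sigma,\lambda)$ is a measure space with finite measure $\lambda$; $L_0(\Omega)$ is the algebra of (classes of a.e. equal) measurable real functions on $\Omega$. For each $\omega\in\Omega$, $\nabla_\omega$ is a complete Boolean algebra carrying a strictly positive finite real-valued measure $\mu_\omega$. The assignment $\omega\mapsto\nabla_\omega$ together with a set $L$ of sections forms a measurable bundle of Boolean algebras over $\Omega$. $\hat\nabla$ denotes the complete Boolean algebra of classes (modulo a.e. equality) of measurable sections $\omega\mapsto e(\omega)\in\nabla_\omega$, and $\hat\mu:\hat\nabla\to L_0(\Omega)$ is the strictly positive $L_0(\Omega)$-valued measure $\hat\mu(\hat e)=$ class of $\omega\mapsto\mu_\omega(e(\omega))$. $L_0(\hat\nabla,\hat\mu)$ is the order complete vector lattice $C_\infty(Q(\hat\nabla))$, and $L_0(\nabla_\omega,\mu_\omega)$ the usual space of measurable functions over $(\nabla_\omega,\mu_\omega)$ with metric $\rho_\omega(a,b)=\int\frac{|a-b|}{1+|a-b|}d\mu_\omega$. It is known that $L_0(\hat\nabla,\hat\mu)$ is identified with the space of classes (mod a.e. equality) of measurable sections $\omega\mapsto f(\omega)\in L_0(\nabla_\omega,\mu_\omega)$ (a.e. $\rho_\omega$-limits of step sections); under this identification $\hat f\le\hat g$ iff $f(\omega)\le g(\omega)$ a.e. In a vector lattice, a sequence $x_n$ is $(o)$-convergent to $x$ (order convergence) if there is a sequence $y_n\downarrow 0$ with $|x_n-x|\le y_n$ for all $n$; in $L_0(\nabla_\omega,\mu_\omega)$ this coincides with $\mu_\omega$-a.e.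 convergence. *)

theory Defs
  imports "HOL-Analysis.Analysis"
begin

text \<open>Fibres: each complete Boolean algebra with a strictly positive finite measure
  (nabla_w, mu_w) is represented as the measure algebra of a finite measure space N w
  (measurable sets modulo null sets); L_0(nabla_w, mu_w) is then the space of real
  Borel functions on N w modulo N w-a.e. equality.\<close>

definition fib_rho :: "'x measure \<Rightarrow> 'x set \<Rightarrow> 'x set \<Rightarrow> real" where
  "fib_rho \<nu> a b = measure \<nu> ((a - b) \<union> (b - a))"

definition fib_rho0 :: "'x measure \<Rightarrow> ('x \<Rightarrow> real) \<Rightarrow> ('x \<Rightarrow> real) \<Rightarrow> real" where
  "fib_rho0 \<nu> a b = (\<integral>x. \<bar>a x - b x\<bar> / (1 + \<bar>a x - b x\<bar>) \<partial>\<nu>)"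

definition meas_bundle :: "'w measure \<Rightarrow> ('w \<Rightarrow> 'x measure) \<Rightarrow> ('w \<Rightarrow> 'x set) set \<Rightarrow> bool" where
  "meas_bundle M N L \<longleftrightarrow>
     finite_measure M \<and>
     (\<forall>\<omega>\<in>space M. finite_measure (N \<omega>)) \<and>
     L \<noteq> {} \<and>
     (\<forall>e\<in>L. \<forall>\<omega>\<in>space M. e \<omega> \<in> sets (N \<omega>)) \<and>
     (\<forall>e\<in>L. (\<lambda>\<omega>. measure (N \<omega>) (e \<omega>)) \<in> borel_measurable M) \<and>
     (\<forall>e\<in>L. \<exists>d\<in>L. \<forall>\<omega>\<in>space M. d \<omega> = space (N \<omega>) - e \<omega>) \<and>
     (\<forall>e\<in>L. \<forall>e'\<in>L. \<exists>d\<in>L. \<forall>\<omega>\<in>space M. d \<omega> = e \<omega> \<union> e' \<omega>) \<and>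
     (\<forall>\<omega>\<in>space M. \<forall>a\<in>sets (N \<omega>). \<forall>\<epsilon>>0. \<exists>e\<in>L. fib_rho (N \<omega>) a (e \<omega>) < \<epsilon>)"

definition step_sec :: "'w measure \<Rightarrow> ('w \<Rightarrow> 'x measure) \<Rightarrow> ('w \<Rightarrow> 'x set) set \<Rightarrow> ('w \<Rightarrow> 'x set) \<Rightarrow> bool" where
  "step_sec M N L s \<longleftrightarrow>
     (\<exists>(n::nat) A e. (\<forall>i<n. A i \<in> sets M \<and> e i \<in> L) \<and> disjoint_family_on A {..<n} \<and>
        (\<forall>\<omega>\<in>space M. s \<omega> = (\<Union>i<n. if \<omega> \<in> A i then e i \<omega> else {})))"

text \<open>Measurable sections of the bundle (representatives of elements of hat nabla).\<close>
definition meas_sec :: "'w measure \<Rightarrow> ('w \<Rightarrow> 'x measure) \<Rightarrow> ('w \<Rightarrow> 'x set) set \<Rightarrow> ('w \<Rightarrow> 'x set) \<Rightarrow> bool" where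
  "meas_sec M N L e \<longleftrightarrow>
     (AE \<omega> in M. e \<omega> \<in> sets (N \<omega>)) \<and>
     (\<exists>s. (\<forall>k. step_sec M N L (s k)) \<and>
          (AE \<omega> in M. (\<lambda>k. fib_rho (N \<omega>) (s k \<omega>) (e \<omega>)) \<longlonglongrightarrow> 0))"

definition L0_step_sec :: "'w measure \<Rightarrow> ('w \<Rightarrow> 'x measure) \<Rightarrow> ('w \<Rightarrow> 'x set) set \<Rightarrow> ('w \<Rightarrow> 'x \<Rightarrow> real) \<Rightarrow> bool" where
  "L0_step_sec M N L s \<longleftrightarrow>
     (\<exists>(n::nat) c e. (\<forall>i<n. meas_sec M N L (e i)) \<and>
        (\<forall>\<omega>\<in>space M. s \<omega> = (\<lambda>x. \<Sum>i<n. (c i :: real) * indicator (e i \<omega>) x)))"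

text \<open>Measurable sections omega |-> f(omega) in L_0(nabla_omega, mu_omega): a.e. rho_omega-limits
  of step sections.  Their classes modulo a.e. equality form L_0(hat nabla, hat mu).\<close>
definition L0_meas_sec :: "'w measure \<Rightarrow> ('w \<Rightarrow> 'x measure) \<Rightarrow> ('w \<Rightarrow> 'x set) set \<Rightarrow> ('w \<Rightarrow> 'x \<Rightarrow> real) \<Rightarrow> bool" where
  "L0_meas_sec M N L f \<longleftrightarrow>
     (AE \<omega> in M. f \<omega> \<in> borel_measurable (N \<omega>)) \<and>
     (\<exists>s. (\<forall>k. L0_step_sec M N L (s k)) \<and>
          (AE \<omega> in M. (\<lambda>k. fib_rho0 (N \<omega>) (s k \<omega>) (f \<omega>)) \<longlonglongrightarrow> 0))"

definition fib_oconv :: "'x measure \<Rightarrow> (nat \<Rightarrow> 'x \<Rightarrow> real) \<Rightarrow> ('x \<Rightarrow> real) \<Rightarrow> bool" where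
  "fib_oconv \<nu> fs f \<longleftrightarrow>
     (\<exists>y. (\<forall>n. y n \<in> borel_measurable \<nu>) \<and>
          (\<forall>n. AE x in \<nu>. y (Suc n) x \<le> y n x) \<and>
          (\<forall>k\<in>borel_measurable \<nu>. (\<forall>n. AE x in \<nu>. k x \<le> y n x) \<longrightarrow> (AE x in \<nu>. k x \<le> 0)) \<and>
          (\<forall>n. AE x in \<nu>. \<bar>fs n x - f x\<bar> \<le> y n x))"

text \<open>(o)-convergence in L_0(hat nabla, hat mu), realised as classes of measurable sections with
  hat f <= hat g iff f(omega) <= g(omega) for a.e. omega.\<close>
definition hat_oconv :: "'w measure \<Rightarrow> ('w \<Rightarrow> 'x measure) \<Rightarrow> ('w \<Rightarrow> 'x set) set \<Rightarrow>
    (nat \<Rightarrow> 'w \<Rightarrow> 'x \<Rightarrow> real) \<Rightarrow> ('w \<Rightarrow> 'x \<Rightarrow> real) \<Rightarrow> bool" where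
  "hat_oconv M N L fs f \<longleftrightarrow>
     (\<exists>y. (\<forall>n. L0_meas_sec M N L (y n)) \<and>
          (\<forall>n. AE \<omega> in M. AE x in N \<omega>. y (Suc n) \<omega> x \<le> y n \<omega> x) \<and>
          (\<forall>k. L0_meas_sec M N L k \<longrightarrow> (\<forall>n. AE \<omega> in M. AE x in N \<omega>. k \<omega> x \<le> y n \<omega> x) \<longrightarrow>
               (AE \<omega> in M. AE x in N \<omega>. k \<omega> x \<le> 0)) \<and>
          (\<forall>n. AE \<omega> in M. AE x in N \<omega>. \<bar>fs n \<omega> x - f \<omega> x\<bar> \<le> y n \<omega> x))"

end

theory Submission
  imports Defs
begin

lemma psi_mono: "0 \<le> (s::real) \<Longrightarrow> s \<le> t \<Longrightarrow> s/(1+s) \<le> t/(1+t)"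
  by (simp add: field_simps)

lemma psi_sub: "0 \<le> (s::real) \<Longrightarrow> 0 \<le> t \<Longrightarrow> (s+t)/(1+(s+t)) \<le> s/(1+s) + t/(1+t)"
proof -
  assume s: "0 \<le> s" and t: "0 \<le> t"
  have "(s+t)/(1+(s+t)) = s/(1+(s+t)) + t/(1+(s+t))" by (simp add: add_divide_distrib)
  also have "s/(1+(s+t)) \<le> s/(1+s)" using s t by (intro divide_left_mono) auto
  also have "t/(1+(s+t)) \<le> t/(1+t)" using s t by (intro divide_left_mono) auto
  finally show ?thesis by simp
qed

lemma psi_bnd: "0 \<le> (t::real) \<Longrightarrow> 0 \<le> t/(1+t) \<and> t/(1+t) \<le> 1"
  by (simp add: field_simps)

lemma rho_integrable:
  fixes a b :: "'x \<Rightarrow> real"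
  assumes "finite_measure \<nu>" "a \<in> borel_measurable \<nu>" "b \<in> borel_measurable \<nu>"
  shows "integrable \<nu> (\<lambda>x. \<bar>a x - b x\<bar> / (1 + \<bar>a x - b x\<bar>))"
proof -
  interpret finite_measure \<nu> by fact
  show ?thesis
  proof (rule finite_measure.integrable_const_bound[OF assms(1), where B=1])
    show "AE x in \<nu>. norm (\<bar>a x - b x\<bar> / (1 + \<bar>a x - b x\<bar>)) \<le> 1"
      using psi_bnd by auto
  qed (use assms in auto)
qed

lemma rho_nonneg: "0 \<le> fib_rho0 \<nu> a b"
  unfolding fib_rho0_def by (rule integral_nonneg_AE) auto

lemma rho_sym: "fib_rho0 \<nu> a b = fib_rho0 \<nu> b a"
  unfolding fib_rho0_def by (simp add: abs_minus_commute)

lemma rho_le: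
  fixes u v a a' b b' :: "'x \<Rightarrow> real"
  assumes fm: "finite_measure \<nu>" and m: "u \<in> borel_measurable \<nu>" "v \<in> borel_measurable \<nu>"
    "a \<in> borel_measurable \<nu>" "a' \<in> borel_measurable \<nu>" "b \<in> borel_measurable \<nu>" "b' \<in> borel_measurable \<nu>"
    and le: "\<forall>x\<in>space \<nu>. \<bar>u x - v x\<bar> \<le> \<bar>a x - a' x\<bar> + \<bar>b x - b' x\<bar>"
  shows "fib_rho0 \<nu> u v \<le> fib_rho0 \<nu> a a' + fib_rho0 \<nu> b b'"
proof -
  have i1: "integrable \<nu> (\<lambda>x. \<bar>a x - a' x\<bar> / (1 + \<bar>a x - a' x\<bar>))"
    using rho_integrable[OF fm m(3,4)] .
  have i2: "integrable \<nu> (\<lambda>x. \<bar>b x - b' x\<bar> / (1 + \<bar>b x - b' x\<bar>))"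
    using rho_integrable[OF fm m(5,6)] .
  have "fib_rho0 \<nu> a a' + fib_rho0 \<nu> b b' =
    (\<integral>x. \<bar>a x - a' x\<bar> / (1 + \<bar>a x - a' x\<bar>) + \<bar>b x - b' x\<bar> / (1 + \<bar>b x - b' x\<bar>) \<partial>\<nu>)"
    unfolding fib_rho0_def using i1 i2 by simp
  moreover have "fib_rho0 \<nu> u v \<le> \<dots>"
    unfolding fib_rho0_def
  proof (rule integral_mono)
    show "integrable \<nu> (\<lambda>x. \<bar>u x - v x\<bar> / (1 + \<bar>u x - v x\<bar>))"
      using rho_integrable[OF fm m(1,2)] .
    show "integrable \<nu> (\<lambda>x. \<bar>a x - a' x\<bar> / (1 + \<bar>a x - a' x\<bar>) + \<bar>b x - b' x\<bar> / (1 + \<bar>b x - b' x\<bar>))"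
      using i1 i2 by simp
    fix x assume "x \<in> space \<nu>"
    then have h: "\<bar>u x - v x\<bar> \<le> \<bar>a x - a' x\<bar> + \<bar>b x - b' x\<bar>" using le by auto
    have "\<bar>u x - v x\<bar> / (1 + \<bar>u x - v x\<bar>) \<le> (\<bar>a x - a' x\<bar> + \<bar>b x - b' x\<bar>) / (1 + (\<bar>a x - a' x\<bar> + \<bar>b x - b' x\<bar>))"
      by (rule psi_mono[OF _ h]) simp
    also have "\<dots> \<le> \<bar>a x - a' x\<bar> / (1 + \<bar>a x - a' x\<bar>) + \<bar>b x - b' x\<bar> / (1 + \<bar>b x - b' x\<bar>)"
      by (rule psi_sub) auto
    finally show "\<bar>u x - v x\<bar> / (1 + \<bar>u x - v x\<bar>) \<le> \<bar>a x - a' x\<bar> / (1 + \<bar>a x - a' x\<bar>) + \<bar>b x - b' x\<bar> / (1 + \<bar>b x - b' x\<bar>)" .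
  qed
  ultimately show ?thesis by simp
qed

lemma rho_tri:
  fixes a b c :: "'x \<Rightarrow> real"
  assumes "finite_measure \<nu>" "a \<in> borel_measurable \<nu>" "b \<in> borel_measurable \<nu>" "c \<in> borel_measurable \<nu>"
  shows "fib_rho0 \<nu> a c \<le> fib_rho0 \<nu> a b + fib_rho0 \<nu> b c"
  by (rule rho_le) (use assms in auto)

lemma rho_cong_left:
  assumes "\<forall>x\<in>space \<nu>. u x = v x"
  shows "fib_rho0 \<nu> u w = fib_rho0 \<nu> v w"
  unfolding fib_rho0_def using assms by (intro Bochner_Integration.integral_cong) auto

lemma rho_lim:
  fixes a :: "nat \<Rightarrow> 'x \<Rightarrow> real"
  assumes fm: "finite_measure \<nu>" and m: "\<And>n. a n \<in> borel_measurable \<nu>" "b \<in> borel_measurable \<nu>"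
    and c: "AE x in \<nu>. (\<lambda>n. a n x) \<longlonglongrightarrow> b x"
  shows "(\<lambda>n. fib_rho0 \<nu> (a n) b) \<longlonglongrightarrow> 0"
proof -
  interpret finite_measure \<nu> by fact
  have "(\<lambda>n. \<integral>x. \<bar>a n x - b x\<bar> / (1 + \<bar>a n x - b x\<bar>) \<partial>\<nu>) \<longlonglongrightarrow> (\<integral>x. 0 \<partial>\<nu>)"
  proof (rule integral_dominated_convergence[where w="\<lambda>_. 1"])
    show "AE x in \<nu>. (\<lambda>n. \<bar>a n x - b x\<bar> / (1 + \<bar>a n x - b x\<bar>)) \<longlonglongrightarrow> 0"
      using c
    proof eventually_elim
      case (elim x)
      have "(\<lambda>n. a n x - b x) \<longlonglongrightarrow> b x - b x"
        by (intro tendsto_intros elim)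
      then have t: "(\<lambda>n. \<bar>a n x - b x\<bar>) \<longlonglongrightarrow> \<bar>b x - b x\<bar>"
        by (rule tendsto_rabs)
      have "(\<lambda>n. \<bar>a n x - b x\<bar> / (1 + \<bar>a n x - b x\<bar>)) \<longlonglongrightarrow> \<bar>b x - b x\<bar> / (1 + \<bar>b x - b x\<bar>)"
            by (rule tendsto_divide[OF t tendsto_add[OF tendsto_const t]]) auto
      then show ?case by simp
    qed
    show "\<And>n. AE x in \<nu>. norm (\<bar>a n x - b x\<bar> / (1 + \<bar>a n x - b x\<bar>)) \<le> 1"
      using psi_bnd by auto
  qed (use m in auto)
  then show ?thesis unfolding fib_rho0_def by simp
qed

lemma fib_rho_inter:
  assumes "finite_measure \<nu>" "a \<in> sets \<nu>" "b \<in> sets \<nu>" "a' \<in> sets \<nu>" "b' \<in> sets \<nu>"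
  shows "fib_rho \<nu> (a \<inter> b) (a' \<inter> b') \<le> fib_rho \<nu> a a' + fib_rho \<nu> b b'"
proof -
  interpret finite_measure \<nu> by fact
  have "fib_rho \<nu> (a \<inter> b) (a' \<inter> b') \<le> measure \<nu> (((a - a') \<union> (a' - a)) \<union> ((b - b') \<union> (b' - b)))"
    unfolding fib_rho_def using assms by (intro finite_measure_mono) auto
  also have "\<dots> \<le> fib_rho \<nu> a a' + fib_rho \<nu> b b'"
    unfolding fib_rho_def using assms by (intro measure_Un_le) auto
  finally show ?thesis .
qed

lemma fib_rho_compl:
  assumes "finite_measure \<nu>" "a \<in> sets \<nu>" "a' \<in> sets \<nu>"
  shows "fib_rho \<nu> (space \<nu> - a) (space \<nu> - a') \<le> fib_rho \<nu> a a'"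
proof -
  interpret finite_measure \<nu> by fact
  show ?thesis
    unfolding fib_rho_def using assms by (intro finite_measure_mono) auto
qed

lemma fib_rho_measure:
  assumes "finite_measure \<nu>" "a \<in> sets \<nu>" "b \<in> sets \<nu>"
  shows "\<bar>measure \<nu> a - measure \<nu> b\<bar> \<le> fib_rho \<nu> a b"
proof -
  interpret finite_measure \<nu> by fact
  have "measure \<nu> a \<le> measure \<nu> (b \<union> ((a - b) \<union> (b - a)))"
    using assms by (intro finite_measure_mono) auto
  also have "\<dots> \<le> measure \<nu> b + fib_rho \<nu> a b"
    unfolding fib_rho_def using assms by (intro measure_Un_le) auto
  finally have 1: "measure \<nu> a \<le> measure \<nu> b + fib_rho \<nu> a b" .
  have "measure \<nu> b \<le> measure \<nu> (a \<union> ((a - b) \<union> (b - a)))"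
    using assms by (intro finite_measure_mono) auto
  also have "\<dots> \<le> measure \<nu> a + fib_rho \<nu> a b"
    unfolding fib_rho_def using assms by (intro measure_Un_le) auto
  finally have 2: "measure \<nu> b \<le> measure \<nu> a + fib_rho \<nu> a b" .
  from 1 2 show ?thesis by linarith
qed

lemma fib_rho_nonneg: "0 \<le> fib_rho \<nu> a b"
  unfolding fib_rho_def by simp

locale mbun =
  fixes M :: "'w measure" and N :: "'w \<Rightarrow> 'x measure" and L :: "('w \<Rightarrow> 'x set) set"
  assumes mb: "meas_bundle M N L"
begin

lemmas mbp = mb[unfolded meas_bundle_def]

lemma fm: "finite_measure M" using mbp by (rule conjunct1)
lemma fN: "\<omega> \<in> space M \<Longrightarrow> finite_measure (N \<omega>)"
  using mbp[THEN conjunct2, THEN conjunct1] by (rule bspec)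
lemma L_ne: "L \<noteq> {}" using mbp[THEN conjunct2, THEN conjunct2, THEN conjunct1] .
lemma L_sets: "e \<in> L \<Longrightarrow> \<omega> \<in> space M \<Longrightarrow> e \<omega> \<in> sets (N \<omega>)"
  using mbp[THEN conjunct2, THEN conjunct2, THEN conjunct2, THEN conjunct1] by simp
lemma L_meas: "e \<in> L \<Longrightarrow> (\<lambda>\<omega>. measure (N \<omega>) (e \<omega>)) \<in> borel_measurable M"
  using mbp[THEN conjunct2, THEN conjunct2, THEN conjunct2, THEN conjunct2, THEN conjunct1] by simp
lemma L_compl: "e \<in> L \<Longrightarrow> \<exists>d\<in>L. \<forall>\<omega>\<in>space M. d \<omega> = space (N \<omega>) - e \<omega>"
  using mbp[THEN conjunct2, THEN conjunct2, THEN conjunct2, THEN conjunct2, THEN conjunct2, THEN conjunct1] by simp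
lemma L_un: "e \<in> L \<Longrightarrow> e' \<in> L \<Longrightarrow> \<exists>d\<in>L. \<forall>\<omega>\<in>space M. d \<omega> = e \<omega> \<union> e' \<omega>"
  using mbp[THEN conjunct2, THEN conjunct2, THEN conjunct2, THEN conjunct2, THEN conjunct2, THEN conjunct2, THEN conjunct1] by simp

lemma L_sub: "e \<in> L \<Longrightarrow> \<omega> \<in> space M \<Longrightarrow> e \<omega> \<subseteq> space (N \<omega>)"
  using L_sets sets.sets_into_space by blast

lemma L_inter: assumes "e \<in> L" "e' \<in> L" shows "\<exists>d\<in>L. \<forall>\<omega>\<in>space M. d \<omega> = e \<omega> \<inter> e' \<omega>"
proof -
  obtain c where c: "c \<in> L" "\<forall>\<omega>\<in>space M. c \<omega> = space (N \<omega>) - e \<omega>" using L_compl[OF assms(1)] by blast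
  obtain c' where c': "c' \<in> L" "\<forall>\<omega>\<in>space M. c' \<omega> = space (N \<omega>) - e' \<omega>" using L_compl[OF assms(2)] by blast
  obtain u where u: "u \<in> L" "\<forall>\<omega>\<in>space M. u \<omega> = c \<omega> \<union> c' \<omega>" using L_un[OF c(1) c'(1)] by blast
  obtain d where d: "d \<in> L" "\<forall>\<omega>\<in>space M. d \<omega> = space (N \<omega>) - u \<omega>" using L_compl[OF u(1)] by blast
  show ?thesis
  proof (intro bexI[OF _ d(1)] ballI)
    fix \<omega> assume "\<omega> \<in> space M"
    note \<omega> = this
    have s1: "e \<omega> \<subseteq> space (N \<omega>)" "e' \<omega> \<subseteq> space (N \<omega>)" using L_sub assms \<omega> by auto
    show "d \<omega> = e \<omega> \<inter> e' \<omega>"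
      unfolding d(2)[rule_format, OF \<omega>] u(2)[rule_format, OF \<omega>] c(2)[rule_format, OF \<omega>] c'(2)[rule_format, OF \<omega>]
      using s1 by blast
  qed
qed

lemma L_full: "\<exists>d\<in>L. \<forall>\<omega>\<in>space M. d \<omega> = space (N \<omega>)"
proof -
  obtain e where e: "e \<in> L" using L_ne by blast
  obtain c where c: "c \<in> L" "\<forall>\<omega>\<in>space M. c \<omega> = space (N \<omega>) - e \<omega>" using L_compl[OF e] by blast
  obtain u where u: "u \<in> L" "\<forall>\<omega>\<in>space M. u \<omega> = e \<omega> \<union> c \<omega>" using L_un[OF e c(1)] by blast
  show ?thesis
  proof (intro bexI[OF _ u(1)] ballI)
    fix \<omega> assume \<omega>: "\<omega> \<in> space M"
    have s1: "e \<omega> \<subseteq> space (N \<omega>)" using L_sub e \<omega> by auto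
    show "u \<omega> = space (N \<omega>)"
      unfolding u(2)[rule_format, OF \<omega>] c(2)[rule_format, OF \<omega>] using s1 by blast
  qed
qed

lemma U1:
  assumes "disjoint_family_on A {..<n}" "j < n" "\<omega> \<in> A j"
  shows "(\<Union>i<n. if \<omega> \<in> A i then E i else {}) = E j"
proof -
  have "\<And>i. i < n \<Longrightarrow> i \<noteq> j \<Longrightarrow> \<omega> \<notin> A i"
    using assms unfolding disjoint_family_on_def by blast
  then show ?thesis using assms(2,3) by (auto split: if_splits)
qed

lemma U0:
  assumes "\<forall>i<n. \<omega> \<notin> A i"
  shows "(\<Union>i<n. if \<omega> \<in> A i then E i else {}) = {}"
  using assms by auto

lemma step_secD:
  assumes "step_sec M N L s"
  obtains n A e where "\<forall>i<n. A i \<in> sets M \<and> e i \<in> L" "disjoint_family_on A {..<(n::nat)}"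
    "\<forall>\<omega>\<in>space M. s \<omega> = (\<Union>i<n. if \<omega> \<in> A i then e i \<omega> else {})"
  using assms that unfolding step_sec_def by blast

lemma step_secI:
  assumes "\<forall>i<n. A i \<in> sets M \<and> e i \<in> L" "disjoint_family_on A {..<(n::nat)}"
    "\<forall>\<omega>\<in>space M. s \<omega> = (\<Union>i<n. if \<omega> \<in> A i then e i \<omega> else {})"
  shows "step_sec M N L s"
  unfolding step_sec_def using assms by blast

lemma step_sets: assumes "step_sec M N L s" "\<omega> \<in> space M" shows "s \<omega> \<in> sets (N \<omega>)"
proof -
  obtain n A e where h: "\<forall>i<n. A i \<in> sets M \<and> e i \<in> L" "disjoint_family_on A {..<(n::nat)}"
    "\<forall>\<omega>\<in>space M. s \<omega> = (\<Union>i<n. if \<omega> \<in> A i then e i \<omega> else {})"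
    using assms(1) by (rule step_secD)
  have "(\<Union>i<n. if \<omega> \<in> A i then e i \<omega> else {}) \<in> sets (N \<omega>)"
    using h(1) L_sets assms(2) by (intro sets.finite_UN) auto
  then show ?thesis using h(3) assms(2) by simp
qed

lemma step_measure: assumes "step_sec M N L s" shows "(\<lambda>\<omega>. measure (N \<omega>) (s \<omega>)) \<in> borel_measurable M"
proof -
  obtain n A e where h: "\<forall>i<n. A i \<in> sets M \<and> e i \<in> L" "disjoint_family_on A {..<(n::nat)}"
    "\<forall>\<omega>\<in>space M. s \<omega> = (\<Union>i<n. if \<omega> \<in> A i then e i \<omega> else {})"
    using assms(1) by (rule step_secD)
  have eq: "measure (N \<omega>) (s \<omega>) = (\<Sum>i<n. indicator (A i) \<omega> * measure (N \<omega>) (e i \<omega>))"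
    if \<omega>: "\<omega> \<in> space M" for \<omega>
  proof (cases "\<exists>j<n. \<omega> \<in> A j")
    case True
    then obtain j where j: "j < n" "\<omega> \<in> A j" by blast
    have "\<And>i. i < n \<Longrightarrow> i \<noteq> j \<Longrightarrow> \<omega> \<notin> A i"
      using h(2) j unfolding disjoint_family_on_def by blast
    then have z: "(\<Sum>i\<in>{..<n}-{j}. indicator (A i) \<omega> * measure (N \<omega>) (e i \<omega>)) = 0"
      by (intro sum.neutral) (auto simp: indicator_def)
    have "(\<Sum>i<n. indicator (A i) \<omega> * measure (N \<omega>) (e i \<omega>)) = indicator (A j) \<omega> * measure (N \<omega>) (e j \<omega>)
       + (\<Sum>i\<in>{..<n}-{j}. indicator (A i) \<omega> * measure (N \<omega>) (e i \<omega>))"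
      using j by (intro sum.remove) auto
    then have "(\<Sum>i<n. indicator (A i) \<omega> * measure (N \<omega>) (e i \<omega>)) = indicator (A j) \<omega> * measure (N \<omega>) (e j \<omega>)"
      using z by simp
    moreover have "s \<omega> = e j \<omega>" unfolding h(3)[rule_format, OF \<omega>] U1[OF h(2) j] ..
    ultimately show ?thesis using j by (simp add: indicator_def)
  next
    case False
    then have nf: "\<forall>i<n. \<omega> \<notin> A i" by blast
    have "s \<omega> = {}" unfolding h(3)[rule_format, OF \<omega>] U0[OF nf] ..
    then show ?thesis using nf by (simp add: indicator_def)
  qed
  have "(\<lambda>\<omega>. (\<Sum>i<n. indicator (A i) \<omega> * measure (N \<omega>) (e i \<omega>))) \<in> borel_measurable M"
    using h(1) L_meas by (intro borel_measurable_sum borel_measurable_times borel_measurable_indicator) auto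
  then show ?thesis using eq by (subst measurable_cong[where g="\<lambda>\<omega>. (\<Sum>i<n. indicator (A i) \<omega> * measure (N \<omega>) (e i \<omega>))"]) auto
qed


lemma step_full: "step_sec M N L (\<lambda>\<omega>. space (N \<omega>))"
proof -
  obtain d where d: "d \<in> L" "\<forall>\<omega>\<in>space M. d \<omega> = space (N \<omega>)" using L_full by blast
  show ?thesis
    by (rule step_secI[where n=1 and A="\<lambda>_. space M" and e="\<lambda>_. d"]) (use d in \<open>auto simp: disjoint_family_on_def\<close>)
qed

lemma step_compl:
  assumes "step_sec M N L s"
  shows "step_sec M N L (\<lambda>\<omega>. space (N \<omega>) - s \<omega>)"
proof -
  obtain n A e where h: "\<forall>i<n. A i \<in> sets M \<and> e i \<in> L" "disjoint_family_on A {..<(n::nat)}"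
    "\<forall>\<omega>\<in>space M. s \<omega> = (\<Union>i<n. if \<omega> \<in> A i then e i \<omega> else {})"
    using assms(1) by (rule step_secD)
  have "\<forall>i. \<exists>c. i < n \<longrightarrow> c \<in> L \<and> (\<forall>\<omega>\<in>space M. c \<omega> = space (N \<omega>) - e i \<omega>)"
    using h(1) L_compl by blast
  then obtain c where c: "\<And>i. i < n \<Longrightarrow> c i \<in> L \<and> (\<forall>\<omega>\<in>space M. c i \<omega> = space (N \<omega>) - e i \<omega>)"
    by metis
  obtain d where d: "d \<in> L" "\<forall>\<omega>\<in>space M. d \<omega> = space (N \<omega>)" using L_full by blast
  define A' where "A' i = (if i < n then A i else space M - (\<Union>j<n. A j))" for i
  define e' where "e' i = (if i < n then c i else d)" for i
  show ?thesis
  proof (rule step_secI[where n="Suc n" and A=A' and e=e'])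
    show "\<forall>i<Suc n. A' i \<in> sets M \<and> e' i \<in> L"
      using h(1) c d unfolding A'_def e'_def by (auto intro!: sets.Diff sets.finite_UN)
    show dA: "disjoint_family_on A' {..<Suc n}"
      using h(2) unfolding disjoint_family_on_def A'_def by auto
    show "\<forall>\<omega>\<in>space M. space (N \<omega>) - s \<omega> = (\<Union>i<Suc n. if \<omega> \<in> A' i then e' i \<omega> else {})"
    proof
      fix \<omega> assume \<omega>: "\<omega> \<in> space M"
      show "space (N \<omega>) - s \<omega> = (\<Union>i<Suc n. if \<omega> \<in> A' i then e' i \<omega> else {})"
      proof (cases "\<exists>j<n. \<omega> \<in> A j")
        case True
        then obtain j where j: "j < n" "\<omega> \<in> A j" by blast
        have "(\<Union>i<Suc n. if \<omega> \<in> A' i then e' i \<omega> else {}) = e' j \<omega>"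
          by (rule U1[OF dA]) (use j in \<open>auto simp: A'_def\<close>)
        also have "\<dots> = space (N \<omega>) - e j \<omega>" using c[OF j(1)] \<omega> j unfolding e'_def by auto
        also have "\<dots> = space (N \<omega>) - s \<omega>" unfolding h(3)[rule_format, OF \<omega>] U1[OF h(2) j] ..
        finally show ?thesis by simp
      next
        case False
        have "(\<Union>i<Suc n. if \<omega> \<in> A' i then e' i \<omega> else {}) = e' n \<omega>"
          by (rule U1[OF dA]) (use False \<omega> in \<open>auto simp: A'_def\<close>)
        also have "\<dots> = space (N \<omega>)" using d \<omega> unfolding e'_def by auto
        also have "\<dots> = space (N \<omega>) - s \<omega>"
        proof -
          have nf: "\<forall>i<n. \<omega> \<notin> A i" using False by blast
          show ?thesis unfolding h(3)[rule_format, OF \<omega>] U0[OF nf] by simp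
        qed
        finally show ?thesis by simp
      qed
    qed
  qed
qed

lemma step_inter:
  assumes "step_sec M N L s" "step_sec M N L t"
  shows "step_sec M N L (\<lambda>\<omega>. s \<omega> \<inter> t \<omega>)"
proof -
  obtain n1 A1 e1 where h1: "\<forall>i<n1. A1 i \<in> sets M \<and> e1 i \<in> L" "disjoint_family_on A1 {..<(n1::nat)}"
    "\<forall>\<omega>\<in>space M. s \<omega> = (\<Union>i<n1. if \<omega> \<in> A1 i then e1 i \<omega> else {})"
    using assms(1) by (rule step_secD)
  obtain n2 A2 e2 where h2: "\<forall>i<n2. A2 i \<in> sets M \<and> e2 i \<in> L" "disjoint_family_on A2 {..<(n2::nat)}"
    "\<forall>\<omega>\<in>space M. t \<omega> = (\<Union>i<n2. if \<omega> \<in> A2 i then e2 i \<omega> else {})"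
    using assms(2) by (rule step_secD)
  have "\<forall>i. \<exists>c. i < n1 * n2 \<longrightarrow> c \<in> L \<and> (\<forall>\<omega>\<in>space M. c \<omega> = e1 (i div n2) \<omega> \<inter> e2 (i mod n2) \<omega>)"
  proof
    fix i show "\<exists>c. i < n1 * n2 \<longrightarrow> c \<in> L \<and> (\<forall>\<omega>\<in>space M. c \<omega> = e1 (i div n2) \<omega> \<inter> e2 (i mod n2) \<omega>)"
    proof (cases "i < n1 * n2")
      case True
      then have "i div n2 < n1" "i mod n2 < n2"
        by (auto simp: less_mult_imp_div_less) (metis mult_0_right not_less_zero mod_less_divisor neq0_conv)
      then show ?thesis using h1(1) h2(1) L_inter by blast
    qed auto
  qed
  then obtain c where c: "\<And>i. i < n1 * n2 \<Longrightarrow> c i \<in> L \<and> (\<forall>\<omega>\<in>space M. c i \<omega> = e1 (i div n2) \<omega> \<inter> e2 (i mod n2) \<omega>)"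
    by metis
  define A where "A i = A1 (i div n2) \<inter> A2 (i mod n2)" for i
  have dm: "i div n2 < n1 \<and> i mod n2 < n2" if "i < n1 * n2" for i
    using that by (auto simp: less_mult_imp_div_less) (metis mult_0_right not_less_zero mod_less_divisor neq0_conv)
  show ?thesis
  proof (rule step_secI[where n="n1 * n2" and A=A and e=c])
    show "\<forall>i<n1 * n2. A i \<in> sets M \<and> c i \<in> L"
      using h1(1) h2(1) c dm unfolding A_def by auto
    show dA: "disjoint_family_on A {..<n1 * n2}"
      unfolding disjoint_family_on_def
    proof (intro ballI impI)
      fix i j assume i: "i \<in> {..<n1 * n2}" and j: "j \<in> {..<n1 * n2}" and ij: "i \<noteq> j"
      have "i div n2 \<noteq> j div n2 \<or> i mod n2 \<noteq> j mod n2"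
        using ij by (metis div_mult_mod_eq)
      then show "A i \<inter> A j = {}"
      proof
        assume "i div n2 \<noteq> j div n2"
        then have "A1 (i div n2) \<inter> A1 (j div n2) = {}"
          using h1(2) dm i j unfolding disjoint_family_on_def by auto
        then show ?thesis unfolding A_def by blast
      next
        assume "i mod n2 \<noteq> j mod n2"
        then have "A2 (i mod n2) \<inter> A2 (j mod n2) = {}"
          using h2(2) dm i j unfolding disjoint_family_on_def by auto
        then show ?thesis unfolding A_def by blast
      qed
    qed
    show "\<forall>\<omega>\<in>space M. s \<omega> \<inter> t \<omega> = (\<Union>i<n1 * n2. if \<omega> \<in> A i then c i \<omega> else {})"
    proof
      fix \<omega> assume \<omega>: "\<omega> \<in> space M"
      show "s \<omega> \<inter> t \<omega> = (\<Union>i<n1 * n2. if \<omega> \<in> A i then c i \<omega> else {})"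
      proof (cases "(\<exists>a<n1. \<omega> \<in> A1 a) \<and> (\<exists>b<n2. \<omega> \<in> A2 b)")
        case True
        then obtain a b where a: "a < n1" "\<omega> \<in> A1 a" and b: "b < n2" "\<omega> \<in> A2 b" by blast
        define i where "i = a * n2 + b"
        have i: "i < n1 * n2" "i div n2 = a" "i mod n2 = b"
        proof -
          have "a * n2 + b < a * n2 + n2" using b by simp
          also have "\<dots> = (a + 1) * n2" by simp
          also have "\<dots> \<le> n1 * n2" using a by (intro mult_right_mono) auto
          finally show "i < n1 * n2" unfolding i_def .
          show "i div n2 = a" "i mod n2 = b" unfolding i_def using b by auto
        qed
        have "(\<Union>i<n1 * n2. if \<omega> \<in> A i then c i \<omega> else {}) = c i \<omega>"
          by (rule U1[OF dA]) (use i a b in \<open>auto simp: A_def\<close>)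
        also have "\<dots> = e1 a \<omega> \<inter> e2 b \<omega>" using c[OF i(1)] i \<omega> by auto
        also have "\<dots> = s \<omega> \<inter> t \<omega>" unfolding h1(3)[rule_format, OF \<omega>] h2(3)[rule_format, OF \<omega>] U1[OF h1(2) a] U1[OF h2(2) b] ..
        finally show ?thesis by simp
      next
        case False
        have "\<forall>i<n1 * n2. \<omega> \<notin> A i" using False dm unfolding A_def by blast
        then have "(\<Union>i<n1 * n2. if \<omega> \<in> A i then c i \<omega> else {}) = {}" by (rule U0)
        moreover have "s \<omega> \<inter> t \<omega> = {}"
        proof (cases "\<exists>a<n1. \<omega> \<in> A1 a")
          case True
          then have nf: "\<forall>i<n2. \<omega> \<notin> A2 i" using False by blast
          show ?thesis unfolding h2(3)[rule_format, OF \<omega>] U0[OF nf] by simp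
        next
          case False
          then have nf: "\<forall>i<n1. \<omega> \<notin> A1 i" by blast
          show ?thesis unfolding h1(3)[rule_format, OF \<omega>] U0[OF nf] by simp
        qed
        ultimately show ?thesis by simp
      qed
    qed
  qed
qed

end

definition aem :: "'w measure \<Rightarrow> ('w \<Rightarrow> real) \<Rightarrow> bool" where
  "aem M h \<longleftrightarrow> (\<exists>g\<in>borel_measurable M. AE \<omega> in M. h \<omega> = g \<omega>)"

lemma aem_meas: "h \<in> borel_measurable M \<Longrightarrow> aem M h"
  unfolding aem_def by auto

lemma aem_cong: assumes "aem M h" "AE \<omega> in M. h \<omega> = h' \<omega>" shows "aem M h'"
proof -
  obtain g where g: "g \<in> borel_measurable M" "AE \<omega> in M. h \<omega> = g \<omega>" using assms(1) unfolding aem_def by blast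
  show ?thesis unfolding aem_def using g assms(2) by (intro bexI[OF _ g(1)]) (auto elim: AE_mp)
qed

lemma aem_add: assumes "aem M h" "aem M k" shows "aem M (\<lambda>\<omega>. h \<omega> + k \<omega>)"
proof -
  obtain g where g: "g \<in> borel_measurable M" "AE \<omega> in M. h \<omega> = g \<omega>" using assms(1) unfolding aem_def by blast
  obtain g' where g': "g' \<in> borel_measurable M" "AE \<omega> in M. k \<omega> = g' \<omega>" using assms(2) unfolding aem_def by blast
  show ?thesis unfolding aem_def
    by (rule bexI[where x="\<lambda>\<omega>. g \<omega> + g' \<omega>"]) (use g g' in auto)
qed

lemma aem_mult: assumes "aem M h" "aem M k" shows "aem M (\<lambda>\<omega>. h \<omega> * k \<omega>)"
proof -
  obtain g where g: "g \<in> borel_measurable M" "AE \<omega> in M. h \<omega> = g \<omega>" using assms(1) unfolding aem_def by blast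
  obtain g' where g': "g' \<in> borel_measurable M" "AE \<omega> in M. k \<omega> = g' \<omega>" using assms(2) unfolding aem_def by blast
  show ?thesis unfolding aem_def
    by (rule bexI[where x="\<lambda>\<omega>. g \<omega> * g' \<omega>"]) (use g g' in auto)
qed

lemma aem_const: "aem M (\<lambda>_. c)"
  by (rule aem_meas) simp

lemma aem_sum: assumes "finite I" "\<And>i. i \<in> I \<Longrightarrow> aem M (f i)" shows "aem M (\<lambda>\<omega>. \<Sum>i\<in>I. f i \<omega>)"
  using assms
proof (induction I rule: finite_induct)
  case empty
  then show ?case by (simp add: aem_const)
next
  case (insert x F)
  then have "aem M (\<lambda>\<omega>. f x \<omega> + (\<Sum>i\<in>F. f i \<omega>))" by (intro aem_add) auto
  then show ?case using insert by simp
qed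

lemma aem_comp: assumes "aem M h" "\<phi> \<in> borel_measurable borel" shows "aem M (\<lambda>\<omega>. \<phi> (h \<omega>))"
proof -
  obtain g where g: "g \<in> borel_measurable M" "AE \<omega> in M. h \<omega> = g \<omega>" using assms(1) unfolding aem_def by blast
  show ?thesis unfolding aem_def
    by (rule bexI[where x="\<lambda>\<omega>. \<phi> (g \<omega>)"]) (use g assms(2) in \<open>auto intro: measurable_compose\<close>)
qed

lemma aem_lim:
  assumes "\<And>j. aem M (H j)" "AE \<omega> in M. (\<lambda>j. H j \<omega>) \<longlonglongrightarrow> h \<omega>"
  shows "aem M h"
proof -
  have "\<forall>j. \<exists>g. g \<in> borel_measurable M \<and> (AE \<omega> in M. H j \<omega> = g \<omega>)"
    using assms(1) unfolding aem_def by blast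
  then obtain g where g: "\<And>j. g j \<in> borel_measurable M" "\<And>j. AE \<omega> in M. H j \<omega> = g j \<omega>"
    by metis
  have ae: "AE \<omega> in M. \<forall>j. H j \<omega> = g j \<omega>" using g(2) by (simp add: AE_all_countable)
  show ?thesis unfolding aem_def
  proof (rule bexI[where x="\<lambda>\<omega>. lim (\<lambda>j. g j \<omega>)"])
    show "(\<lambda>\<omega>. lim (\<lambda>j. g j \<omega>)) \<in> borel_measurable M"
      by (rule borel_measurable_lim_metric) (rule g(1))
    show "AE \<omega> in M. h \<omega> = lim (\<lambda>j. g j \<omega>)"
      using ae assms(2)
    proof eventually_elim
      case (elim \<omega>)
      then have "(\<lambda>j. g j \<omega>) \<longlonglongrightarrow> h \<omega>" by simp
      then show ?case by (simp add: limI)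
    qed
  qed
qed

lemma squeeze0:
  fixes a b :: "nat \<Rightarrow> real"
  assumes "\<And>k. 0 \<le> a k" "\<And>k. a k \<le> b k" "b \<longlonglongrightarrow> 0"
  shows "a \<longlonglongrightarrow> 0"
  by (rule tendsto_sandwich[OF _ _ tendsto_const assms(3)]) (use assms in auto)

lemma squeeze_abs:
  fixes a b :: "nat \<Rightarrow> real"
  assumes "\<And>k. \<bar>a k - c\<bar> \<le> b k" "b \<longlonglongrightarrow> 0"
  shows "a \<longlonglongrightarrow> c"
proof -
  have "(\<lambda>k. \<bar>a k - c\<bar>) \<longlonglongrightarrow> 0" by (rule squeeze0[OF _ assms]) auto
  then have "(\<lambda>k. a k - c) \<longlonglongrightarrow> 0" by (rule tendsto_rabs_zero_cancel)
  then show ?thesis by (rule LIM_zero_cancel)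
qed

context mbun
begin

lemma meas_secD:
  assumes "meas_sec M N L e"
  shows "\<exists>s :: nat \<Rightarrow> 'w \<Rightarrow> 'x set. (AE \<omega> in M. e \<omega> \<in> sets (N \<omega>)) \<and> (\<forall>k. step_sec M N L (s k)) \<and>
    (AE \<omega> in M. (\<lambda>k. fib_rho (N \<omega>) (s k \<omega>) (e \<omega>)) \<longlonglongrightarrow> 0)"
  using assms unfolding meas_sec_def by blast

lemma meas_sec_step: assumes "step_sec M N L s" shows "meas_sec M N L s"
  unfolding meas_sec_def
proof (intro conjI exI[where x="\<lambda>_. s"])
  show "AE \<omega> in M. s \<omega> \<in> sets (N \<omega>)" using step_sets[OF assms] by (intro AE_I2) auto
qed (use assms in \<open>auto simp: fib_rho_def\<close>)

lemma meas_sec_cong: assumes "meas_sec M N L e" "AE \<omega> in M. e \<omega> = e' \<omega>" shows "meas_sec M N L e'"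
proof -
  obtain s :: "nat \<Rightarrow> _" where s: "AE \<omega> in M. e \<omega> \<in> sets (N \<omega>)" "\<And>k. step_sec M N L (s k)"
    "AE \<omega> in M. (\<lambda>k. fib_rho (N \<omega>) (s k \<omega>) (e \<omega>)) \<longlonglongrightarrow> 0"
    using meas_secD[OF assms(1)] by blast
  show ?thesis unfolding meas_sec_def
    by (intro conjI exI[where x=s]) (use s assms(2) in \<open>auto elim: AE_mp\<close>)
qed

lemma meas_sec_full: "meas_sec M N L (\<lambda>\<omega>. space (N \<omega>))"
  by (rule meas_sec_step[OF step_full])

lemma meas_sec_compl: assumes "meas_sec M N L e" shows "meas_sec M N L (\<lambda>\<omega>. space (N \<omega>) - e \<omega>)"
proof -
  obtain s :: "nat \<Rightarrow> _" where s: "AE \<omega> in M. e \<omega> \<in> sets (N \<omega>)" "\<And>k. step_sec M N L (s k)"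
    "AE \<omega> in M. (\<lambda>k. fib_rho (N \<omega>) (s k \<omega>) (e \<omega>)) \<longlonglongrightarrow> 0"
    using meas_secD[OF assms(1)] by blast
  show ?thesis unfolding meas_sec_def
  proof (intro conjI exI[where x="\<lambda>k \<omega>. space (N \<omega>) - s k \<omega>"] allI)
    show "AE \<omega> in M. space (N \<omega>) - e \<omega> \<in> sets (N \<omega>)" using s(1) by eventually_elim auto
    show "\<And>k. step_sec M N L (\<lambda>\<omega>. space (N \<omega>) - s k \<omega>)" using s(2) by (rule step_compl)
    have "AE \<omega> in M. \<omega> \<in> space M" by (rule AE_I2)
    then show "AE \<omega> in M. (\<lambda>k. fib_rho (N \<omega>) (space (N \<omega>) - s k \<omega>) (space (N \<omega>) - e \<omega>)) \<longlonglongrightarrow> 0"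
      using s(1,3)
    proof eventually_elim
      case (elim \<omega>)
      show ?case
        by (rule squeeze0[OF fib_rho_nonneg fib_rho_compl[OF fN] elim(3)])
           (use elim step_sets[OF s(2)] in auto)
    qed
  qed
qed

lemma meas_sec_inter:
  assumes "meas_sec M N L e" "meas_sec M N L e'"
  shows "meas_sec M N L (\<lambda>\<omega>. e \<omega> \<inter> e' \<omega>)"
proof -
  obtain s :: "nat \<Rightarrow> _" where s: "AE \<omega> in M. e \<omega> \<in> sets (N \<omega>)" "\<And>k. step_sec M N L (s k)"
    "AE \<omega> in M. (\<lambda>k. fib_rho (N \<omega>) (s k \<omega>) (e \<omega>)) \<longlonglongrightarrow> 0"
    using meas_secD[OF assms(1)] by blast
  obtain s' :: "nat \<Rightarrow> _" where s': "AE \<omega> in M. e' \<omega> \<in> sets (N \<omega>)" "\<And>k. step_sec M N L (s' k)"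
    "AE \<omega> in M. (\<lambda>k. fib_rho (N \<omega>) (s' k \<omega>) (e' \<omega>)) \<longlonglongrightarrow> 0"
    using meas_secD[OF assms(2)] by blast
  show ?thesis unfolding meas_sec_def
  proof (intro conjI exI[where x="\<lambda>k \<omega>. s k \<omega> \<inter> s' k \<omega>"] allI)
    show "AE \<omega> in M. e \<omega> \<inter> e' \<omega> \<in> sets (N \<omega>)" using s(1) s'(1) by eventually_elim auto
    show "\<And>k. step_sec M N L (\<lambda>\<omega>. s k \<omega> \<inter> s' k \<omega>)" using s(2) s'(2) by (rule step_inter)
    have "AE \<omega> in M. \<omega> \<in> space M" by (rule AE_I2)
    then show "AE \<omega> in M. (\<lambda>k. fib_rho (N \<omega>) (s k \<omega> \<inter> s' k \<omega>) (e \<omega> \<inter> e' \<omega>)) \<longlonglongrightarrow> 0"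
      using s(1,3) s'(1,3)
    proof eventually_elim
      case (elim \<omega>)
      have "(\<lambda>k. fib_rho (N \<omega>) (s k \<omega>) (e \<omega>) + fib_rho (N \<omega>) (s' k \<omega>) (e' \<omega>)) \<longlonglongrightarrow> 0 + 0"
        using elim by (intro tendsto_add) auto
      then show ?case
        by (intro squeeze0[OF fib_rho_nonneg fib_rho_inter[OF fN]])
           (use elim step_sets[OF s(2)] step_sets[OF s'(2)] in auto)
    qed
  qed
qed

lemma meas_sec_measure:
  assumes "meas_sec M N L e"
  shows "aem M (\<lambda>\<omega>. measure (N \<omega>) (e \<omega>))"
proof -
  obtain s :: "nat \<Rightarrow> _" where s: "AE \<omega> in M. e \<omega> \<in> sets (N \<omega>)" "\<And>k. step_sec M N L (s k)"
    "AE \<omega> in M. (\<lambda>k. fib_rho (N \<omega>) (s k \<omega>) (e \<omega>)) \<longlonglongrightarrow> 0"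
    using meas_secD[OF assms(1)] by blast
  show ?thesis
  proof (rule aem_lim[where H="\<lambda>k \<omega>. measure (N \<omega>) (s k \<omega>)"])
    show "\<And>j. aem M (\<lambda>\<omega>. measure (N \<omega>) (s j \<omega>))" by (rule aem_meas[OF step_measure[OF s(2)]])
    have "AE \<omega> in M. \<omega> \<in> space M" by (rule AE_I2)
    then show "AE \<omega> in M. (\<lambda>j. measure (N \<omega>) (s j \<omega>)) \<longlonglongrightarrow> measure (N \<omega>) (e \<omega>)"
      using s(1,3)
    proof eventually_elim
      case (elim \<omega>)
      show ?case
        by (rule squeeze_abs[OF fib_rho_measure[OF fN] elim(3)]) (use elim step_sets[OF s(2)] in auto)
    qed
  qed
qed

lemma meas_sec_Inter:
  assumes "finite I" "\<And>i. i \<in> I \<Longrightarrow> meas_sec M N L (f i)"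
  shows "meas_sec M N L (\<lambda>\<omega>. space (N \<omega>) \<inter> (\<Inter>i\<in>I. f i \<omega>))"
  using assms
proof (induction I rule: finite_induct)
  case empty
  then show ?case using meas_sec_full by simp
next
  case (insert x F)
  have a: "meas_sec M N L (f x)" using insert.prems by auto
  have b: "meas_sec M N L (\<lambda>\<omega>. space (N \<omega>) \<inter> (\<Inter>i\<in>F. f i \<omega>))" using insert by auto
  have "meas_sec M N L (\<lambda>\<omega>. f x \<omega> \<inter> (space (N \<omega>) \<inter> (\<Inter>i\<in>F. f i \<omega>)))"
    by (rule meas_sec_inter[OF a b])
  then show ?case by (rule meas_sec_cong) (intro AE_I2, blast)
qed

end

context mbun
begin

lemma L0_stepD:
  assumes "L0_step_sec M N L s"
  shows "\<exists>(n::nat) c e. (\<forall>i<n. meas_sec M N L (e i)) \<and>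
        (\<forall>\<omega>\<in>space M. s \<omega> = (\<lambda>x. \<Sum>i<n. (c i :: real) * indicator (e i \<omega>) x))"
  using assms unfolding L0_step_sec_def by blast

lemma L0_step_cong:
  assumes "L0_step_sec M N L s" "\<forall>\<omega>\<in>space M. s \<omega> = t \<omega>"
  shows "L0_step_sec M N L t"
  using assms unfolding L0_step_sec_def by metis

lemma L0_step_zero: "L0_step_sec M N L (\<lambda>\<omega> x. 0)"
  unfolding L0_step_sec_def by (intro exI[where x=0]) auto

lemma L0_step_snoc:
  assumes "L0_step_sec M N L s" "meas_sec M N L e0"
  shows "L0_step_sec M N L (\<lambda>\<omega> x. s \<omega> x + c0 * indicator (e0 \<omega>) x)"
proof -
  obtain n c e where h: "\<forall>i<(n::nat). meas_sec M N L (e i)"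
    "\<forall>\<omega>\<in>space M. s \<omega> = (\<lambda>x. \<Sum>i<n. (c i :: real) * indicator (e i \<omega>) x)"
    using L0_stepD[OF assms(1)] by blast
  show ?thesis unfolding L0_step_sec_def
  proof (intro exI[where x="Suc n"] exI[where x="c(n := c0)"] exI[where x="e(n := e0)"] conjI ballI)
    show "\<forall>i<Suc n. meas_sec M N L ((e(n := e0)) i)" using h(1) assms(2) by (auto simp: less_Suc_eq)
    fix \<omega> assume \<omega>: "\<omega> \<in> space M"
    have "(\<lambda>x. \<Sum>i<Suc n. (c(n := c0)) i * indicator ((e(n := e0)) i \<omega>) x)
        = (\<lambda>x. (\<Sum>i<n. c i * indicator (e i \<omega>) x) + c0 * indicator (e0 \<omega>) x)"
      by (auto simp: sum.lessThan_Suc intro!: sum.cong)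
    then show "(\<lambda>x. s \<omega> x + c0 * indicator (e0 \<omega>) x) =
        (\<lambda>x. \<Sum>i<Suc n. (c(n := c0)) i * indicator ((e(n := e0)) i \<omega>) x)"
      using h(2) \<omega> by simp
  qed
qed

lemma L0_step_single:
  assumes "meas_sec M N L e0"
  shows "L0_step_sec M N L (\<lambda>\<omega> x. c0 * indicator (e0 \<omega>) x)"
  using L0_step_snoc[OF L0_step_zero assms, of c0] by simp

lemma L0_step_add:
  assumes "L0_step_sec M N L s" "L0_step_sec M N L t"
  shows "L0_step_sec M N L (\<lambda>\<omega> x. s \<omega> x + t \<omega> x)"
proof -
  obtain n c e where h: "\<forall>i<(n::nat). meas_sec M N L (e i)"
    "\<forall>\<omega>\<in>space M. t \<omega> = (\<lambda>x. \<Sum>i<n. (c i :: real) * indicator (e i \<omega>) x)"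
    using L0_stepD[OF assms(2)] by blast
  have "m \<le> n \<Longrightarrow> L0_step_sec M N L (\<lambda>\<omega> x. s \<omega> x + (\<Sum>i<m. c i * indicator (e i \<omega>) x))" for m
  proof (induction m)
    case 0
    then show ?case using assms(1) by simp
  next
    case (Suc m)
    then have "L0_step_sec M N L (\<lambda>\<omega> x. (s \<omega> x + (\<Sum>i<m. c i * indicator (e i \<omega>) x)) + c m * indicator (e m \<omega>) x)"
      using h(1) by (intro L0_step_snoc) auto
    then show ?case by (simp add: sum.lessThan_Suc add.assoc)
  qed
  then have "L0_step_sec M N L (\<lambda>\<omega> x. s \<omega> x + (\<Sum>i<n. c i * indicator (e i \<omega>) x))" by simp
  then show ?thesis by (rule L0_step_cong) (use h(2) in auto)
qed

lemma L0_step_sum: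
  assumes "finite I" "\<And>j. j \<in> I \<Longrightarrow> L0_step_sec M N L (f j)"
  shows "L0_step_sec M N L (\<lambda>\<omega> x. \<Sum>j\<in>I. f j \<omega> x)"
  using assms
proof (induction I rule: finite_induct)
  case empty
  then show ?case using L0_step_zero by simp
next
  case (insert a F)
  then have "L0_step_sec M N L (\<lambda>\<omega> x. f a \<omega> x + (\<Sum>j\<in>F. f j \<omega> x))"
    by (intro L0_step_add) auto
  then show ?case using insert by simp
qed

definition pat :: "nat \<Rightarrow> (nat \<Rightarrow> 'w \<Rightarrow> 'x set) \<Rightarrow> 'w \<Rightarrow> 'x \<Rightarrow> nat set" where
  "pat n e \<omega> x = {i. i < n \<and> x \<in> e i \<omega>}"

definition atom :: "nat \<Rightarrow> (nat \<Rightarrow> 'w \<Rightarrow> 'x set) \<Rightarrow> nat set \<Rightarrow> 'w \<Rightarrow> 'x set" where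
  "atom n e S \<omega> = space (N \<omega>) \<inter> (\<Inter>i\<in>{..<n}. if i \<in> S then e i \<omega> else space (N \<omega>) - e i \<omega>)"

lemma pat_sub: "pat n e \<omega> x \<in> Pow {..<n}"
  unfolding pat_def by auto

lemma atom_iff:
  assumes "x \<in> space (N \<omega>)" "S \<subseteq> {..<n}"
  shows "x \<in> atom n e S \<omega> \<longleftrightarrow> S = pat n e \<omega> x"
  using assms unfolding atom_def pat_def by (auto split: if_splits)

lemma atom_sum:
  assumes "x \<in> space (N \<omega>)"
  shows "(\<Sum>S\<in>Pow {..<n}. (H S :: real) * indicator (atom n e S \<omega>) x) = H (pat n e \<omega> x)"
proof -
  have z: "(\<Sum>S\<in>Pow {..<n} - {pat n e \<omega> x}. H S * indicator (atom n e S \<omega>) x) = 0"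
    using atom_iff[OF assms] by (intro sum.neutral) (auto simp: indicator_def)
  have "(\<Sum>S\<in>Pow {..<n}. H S * indicator (atom n e S \<omega>) x) =
      H (pat n e \<omega> x) * indicator (atom n e (pat n e \<omega> x) \<omega>) x + (\<Sum>S\<in>Pow {..<n} - {pat n e \<omega> x}. H S * indicator (atom n e S \<omega>) x)"
    using pat_sub by (intro sum.remove) auto
  also have "\<dots> = H (pat n e \<omega> x)"
    using z atom_iff[OF assms pat_sub[unfolded Pow_iff]] by (simp add: indicator_def)
  finally show ?thesis .
qed

lemma atom_meas:
  assumes "\<forall>i<n. meas_sec M N L (e i)"
  shows "meas_sec M N L (atom n e S)"
proof -
  define f where "f i \<omega> = (if i \<in> S then e i \<omega> else space (N \<omega>) - e i \<omega>)" for i \<omega>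
  have fi: "meas_sec M N L (f i)" if "i \<in> {..<n}" for i
  proof -
    have "meas_sec M N L (e i)" using assms that by auto
    then show "meas_sec M N L (f i)" unfolding f_def[abs_def]
      by (cases "i \<in> S") (auto intro: meas_sec_compl)
  qed
  have "meas_sec M N L (\<lambda>\<omega>. space (N \<omega>) \<inter> (\<Inter>i\<in>{..<n}. f i \<omega>))"
    by (rule meas_sec_Inter[OF finite_lessThan fi])
  then show ?thesis unfolding atom_def[abs_def] f_def by simp
qed

lemma atom_sets:
  assumes "\<forall>i<n. e i \<omega> \<in> sets (N \<omega>)"
  shows "atom n e S \<omega> \<in> sets (N \<omega>)"
proof -
  have "atom n e S \<omega> = space (N \<omega>) - (\<Union>i\<in>{..<n}. space (N \<omega>) - (if i \<in> S then e i \<omega> else space (N \<omega>) - e i \<omega>))"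
    unfolding atom_def by auto
  also have "\<dots> \<in> sets (N \<omega>)" using assms by (intro sets.Diff sets.finite_UN) auto
  finally show ?thesis .
qed

lemma atom_step:
  assumes "\<forall>i<n. meas_sec M N L (e i)"
  shows "\<exists>t. L0_step_sec M N L t \<and> (\<forall>\<omega>\<in>space M. \<forall>x\<in>space (N \<omega>). t \<omega> x = h (pat n e \<omega> x))"
proof (intro exI conjI)
  show "L0_step_sec M N L (\<lambda>\<omega> x. \<Sum>S\<in>Pow {..<n}. h S * indicator (atom n e S \<omega>) x)"
    using atom_meas[OF assms] by (intro L0_step_sum L0_step_single) auto
  show "\<forall>\<omega>\<in>space M. \<forall>x\<in>space (N \<omega>). (\<Sum>S\<in>Pow {..<n}. h S * indicator (atom n e S \<omega>) x) = h (pat n e \<omega> x)"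
    using atom_sum by blast
qed

lemma meas_sec_AE_sets:
  fixes n :: nat
  assumes "\<forall>i<n. meas_sec M N L (e i)"
  shows "AE \<omega> in M. \<forall>i<n. e i \<omega> \<in> sets (N \<omega>)"
proof -
  have "AE \<omega> in M. \<forall>i\<in>{..<n}. e i \<omega> \<in> sets (N \<omega>)"
  proof (rule AE_finite_allI)
    fix i assume "i \<in> {..<n}"
    then show "AE \<omega> in M. e i \<omega> \<in> sets (N \<omega>)" using assms meas_secD by blast
  qed simp
  then show ?thesis by eventually_elim auto
qed

lemma pat_integral:
  assumes "finite_measure (N \<omega>)" "\<forall>i<n. e i \<omega> \<in> sets (N \<omega>)"
  shows "(\<integral>x. H (pat n e \<omega> x) \<partial>N \<omega>) = (\<Sum>S\<in>Pow {..<n}. (H S :: real) * measure (N \<omega>) (atom n e S \<omega>))"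
proof -
  interpret finite_measure "N \<omega>" by fact
  have "(\<integral>x. H (pat n e \<omega> x) \<partial>N \<omega>) = (\<integral>x. (\<Sum>S\<in>Pow {..<n}. H S * indicator (atom n e S \<omega>) x) \<partial>N \<omega>)"
    using atom_sum by (intro Bochner_Integration.integral_cong) auto
  also have "\<dots> = (\<Sum>S\<in>Pow {..<n}. (\<integral>x. H S * indicator (atom n e S \<omega>) x \<partial>N \<omega>))"
    using atom_sets[of n e \<omega>] assms(2)
    by (intro Bochner_Integration.integral_sum integrable_mult_right integrable_real_indicator) (auto simp: less_top[symmetric])
  also have "\<dots> = (\<Sum>S\<in>Pow {..<n}. H S * measure (N \<omega>) (atom n e S \<omega>))"
  proof (rule sum.cong)
    fix S
    have "atom n e S \<omega> \<subseteq> space (N \<omega>)" unfolding atom_def by auto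
    then show "(\<integral>x. H S * indicator (atom n e S \<omega>) x \<partial>N \<omega>) = H S * measure (N \<omega>) (atom n e S \<omega>)"
      by (simp add: Int_absorb2)
  qed simp
  finally show ?thesis .
qed

lemma pat_integral_aem:
  assumes "\<forall>i<n. meas_sec M N L (e i)"
  shows "aem M (\<lambda>\<omega>. \<integral>x. H (pat n e \<omega> x) \<partial>N \<omega>)"
proof (rule aem_cong)
  show "aem M (\<lambda>\<omega>. \<Sum>S\<in>Pow {..<n}. (H S :: real) * measure (N \<omega>) (atom n e S \<omega>))"
    using meas_sec_measure[OF atom_meas[OF assms]] by (intro aem_sum aem_mult aem_const) auto
  have "AE \<omega> in M. \<omega> \<in> space M" by (rule AE_I2)
  then show "AE \<omega> in M. (\<Sum>S\<in>Pow {..<n}. H S * measure (N \<omega>) (atom n e S \<omega>)) = (\<integral>x. H (pat n e \<omega> x) \<partial>N \<omega>)"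
    using meas_sec_AE_sets[OF assms] by eventually_elim (simp add: pat_integral fN)
qed

lemma L0_step_rep:
  assumes "L0_step_sec M N L s"
  shows "\<exists>n e h. (\<forall>i<n. meas_sec M N L (e i)) \<and> (\<forall>\<omega>\<in>space M. \<forall>x. s \<omega> x = h (pat n e \<omega> x))"
proof -
  obtain n c e where h: "\<forall>i<(n::nat). meas_sec M N L (e i)"
    "\<forall>\<omega>\<in>space M. s \<omega> = (\<lambda>x. \<Sum>i<n. (c i :: real) * indicator (e i \<omega>) x)"
    using L0_stepD[OF assms(1)] by blast
  show ?thesis
  proof (intro exI conjI)
    show "\<forall>i<n. meas_sec M N L (e i)" by fact
    show "\<forall>\<omega>\<in>space M. \<forall>x. s \<omega> x = (\<lambda>S. \<Sum>i\<in>S. c i) (pat n e \<omega> x)"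
    proof (intro ballI allI)
      fix \<omega> x assume "\<omega> \<in> space M"
      then have "s \<omega> x = (\<Sum>i<n. c i * indicator (e i \<omega>) x)" using h(2) by simp
      also have "\<dots> = (\<Sum>i\<in>{..<n}. if x \<in> e i \<omega> then c i else 0)"
        by (intro sum.cong) (auto simp: indicator_def)
      also have "\<dots> = (\<Sum>i\<in>{i \<in> {..<n}. x \<in> e i \<omega>}. c i)"
        by (rule sum.inter_filter[symmetric]) simp
      also have "{i \<in> {..<n}. x \<in> e i \<omega>} = pat n e \<omega> x" unfolding pat_def by auto
      finally show "s \<omega> x = (\<lambda>S. \<Sum>i\<in>S. c i) (pat n e \<omega> x)" by simp
    qed
  qed
qed

lemma L0_step_rep2:
  assumes "L0_step_sec M N L s" "L0_step_sec M N L t"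
  shows "\<exists>n e h1 h2. (\<forall>i<n. meas_sec M N L (e i)) \<and>
     (\<forall>\<omega>\<in>space M. \<forall>x. s \<omega> x = h1 (pat n e \<omega> x) \<and> t \<omega> x = h2 (pat n e \<omega> x))"
proof -
  obtain n1 e1 h1 where r1: "\<forall>i<n1. meas_sec M N L (e1 i)" "\<forall>\<omega>\<in>space M. \<forall>x. s \<omega> x = h1 (pat n1 e1 \<omega> x)"
    using L0_step_rep[OF assms(1)] by blast
  obtain n2 e2 h2 where r2: "\<forall>i<n2. meas_sec M N L (e2 i)" "\<forall>\<omega>\<in>space M. \<forall>x. t \<omega> x = h2 (pat n2 e2 \<omega> x)"
    using L0_step_rep[OF assms(2)] by blast
  define e where "e i = (if i < n1 then e1 i else e2 (i - n1))" for i
  have p1: "pat n1 e1 \<omega> x = {i \<in> pat (n1 + n2) e \<omega> x. i < n1}" for \<omega> x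
    unfolding pat_def e_def by auto
  have p2: "pat n2 e2 \<omega> x = {j. n1 + j \<in> pat (n1 + n2) e \<omega> x}" for \<omega> x
    unfolding pat_def e_def by auto
  show ?thesis
  proof (intro exI conjI)
    show "\<forall>i<n1 + n2. meas_sec M N L (e i)"
      using r1(1) r2(1) unfolding e_def by auto
    show "\<forall>\<omega>\<in>space M. \<forall>x. s \<omega> x = (\<lambda>S. h1 {i \<in> S. i < n1}) (pat (n1 + n2) e \<omega> x) \<and>
        t \<omega> x = (\<lambda>S. h2 {j. n1 + j \<in> S}) (pat (n1 + n2) e \<omega> x)"
      using r1(2) r2(2) p1 p2 by simp
  qed
qed

lemma L0_step_meas:
  assumes "L0_step_sec M N L s"
  shows "AE \<omega> in M. s \<omega> \<in> borel_measurable (N \<omega>)"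
proof -
  obtain n c e where h: "\<forall>i<(n::nat). meas_sec M N L (e i)"
    "\<forall>\<omega>\<in>space M. s \<omega> = (\<lambda>x. \<Sum>i<n. (c i :: real) * indicator (e i \<omega>) x)"
    using L0_stepD[OF assms(1)] by blast
  have "AE \<omega> in M. \<omega> \<in> space M" by (rule AE_I2)
  then show ?thesis using meas_sec_AE_sets[OF h(1)]
  proof eventually_elim
    case (elim \<omega>)
    have "(\<lambda>x. \<Sum>i<n. c i * indicator (e i \<omega>) x) \<in> borel_measurable (N \<omega>)"
      using elim by (intro borel_measurable_sum borel_measurable_times borel_measurable_const borel_measurable_indicator) auto
    then show ?case using h(2) elim by simp
  qed
qed

lemma rho_step_aem:
  assumes "L0_step_sec M N L s" "L0_step_sec M N L t"
  shows "aem M (\<lambda>\<omega>. fib_rho0 (N \<omega>) (s \<omega>) (t \<omega>))"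
proof -
  obtain n e h1 h2 where r: "\<forall>i<n. meas_sec M N L (e i)"
     "\<forall>\<omega>\<in>space M. \<forall>x. s \<omega> x = h1 (pat n e \<omega> x) \<and> t \<omega> x = h2 (pat n e \<omega> x)"
    using L0_step_rep2[OF assms] by blast
  show ?thesis
  proof (rule aem_cong)
    show "aem M (\<lambda>\<omega>. \<integral>x. (\<lambda>S. \<bar>h1 S - h2 S\<bar> / (1 + \<bar>h1 S - h2 S\<bar>)) (pat n e \<omega> x) \<partial>N \<omega>)"
      by (rule pat_integral_aem[OF r(1)])
    show "AE \<omega> in M. (\<integral>x. (\<lambda>S. \<bar>h1 S - h2 S\<bar> / (1 + \<bar>h1 S - h2 S\<bar>)) (pat n e \<omega> x) \<partial>N \<omega>) = fib_rho0 (N \<omega>) (s \<omega>) (t \<omega>)"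
      by (rule AE_I2) (use r(2) in \<open>simp add: fib_rho0_def\<close>)
  qed
qed

end

lemma minlim:
  fixes a :: "nat \<Rightarrow> real"
  assumes "(\<lambda>n. min 1 \<bar>a n\<bar>) \<longlonglongrightarrow> 0"
  shows "a \<longlonglongrightarrow> 0"
proof -
  have "eventually (\<lambda>n. min 1 \<bar>a n\<bar> < 1) sequentially"
    using order_tendstoD(2)[OF assms, of 1] by simp
  then have "eventually (\<lambda>n. min 1 \<bar>a n\<bar> = \<bar>a n\<bar>) sequentially"
    by eventually_elim auto
  then have "(\<lambda>n. \<bar>a n\<bar>) \<longlonglongrightarrow> 0" by (rule Lim_transform_eventually[OF assms])
  then show ?thesis by (rule tendsto_rabs_zero_cancel)
qed

context mbun
begin

lemma L0_meas_secD:
  assumes "L0_meas_sec M N L f"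
  shows "\<exists>s :: nat \<Rightarrow> 'w \<Rightarrow> 'x \<Rightarrow> real. (AE \<omega> in M. f \<omega> \<in> borel_measurable (N \<omega>)) \<and> (\<forall>k. L0_step_sec M N L (s k)) \<and>
    (AE \<omega> in M. (\<lambda>k. fib_rho0 (N \<omega>) (s k \<omega>) (f \<omega>)) \<longlonglongrightarrow> 0)"
  using assms unfolding L0_meas_sec_def by blast

lemma L0_meas_sec_meas:
  assumes "L0_meas_sec M N L f"
  shows "AE \<omega> in M. f \<omega> \<in> borel_measurable (N \<omega>)"
  using assms unfolding L0_meas_sec_def by blast

lemma rho_aem:
  assumes "L0_step_sec M N L s" "L0_meas_sec M N L f"
  shows "aem M (\<lambda>\<omega>. fib_rho0 (N \<omega>) (s \<omega>) (f \<omega>))"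
proof -
  obtain t :: "nat \<Rightarrow> _" where t: "AE \<omega> in M. f \<omega> \<in> borel_measurable (N \<omega>)" "\<forall>k. L0_step_sec M N L (t k)"
    "AE \<omega> in M. (\<lambda>k. fib_rho0 (N \<omega>) (t k \<omega>) (f \<omega>)) \<longlonglongrightarrow> 0"
    using L0_meas_secD[OF assms(2)] by blast
  show ?thesis
  proof (rule aem_lim[where H="\<lambda>j \<omega>. fib_rho0 (N \<omega>) (s \<omega>) (t j \<omega>)"])
    show "\<And>j. aem M (\<lambda>\<omega>. fib_rho0 (N \<omega>) (s \<omega>) (t j \<omega>))"
      using t(2) assms(1) by (intro rho_step_aem) auto
    have tm: "AE \<omega> in M. \<forall>j. t j \<omega> \<in> borel_measurable (N \<omega>)"
      using t(2) L0_step_meas by (simp add: AE_all_countable)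
    have "AE \<omega> in M. \<omega> \<in> space M" by (rule AE_I2)
    then show "AE \<omega> in M. (\<lambda>j. fib_rho0 (N \<omega>) (s \<omega>) (t j \<omega>)) \<longlonglongrightarrow> fib_rho0 (N \<omega>) (s \<omega>) (f \<omega>)"
      using t(1,3) tm L0_step_meas[OF assms(1)]
    proof eventually_elim
      case (elim \<omega>)
      note fN' = fN[OF elim(1)]
      show ?case
      proof (rule squeeze_abs[OF _ elim(3)])
        fix k
        have "fib_rho0 (N \<omega>) (s \<omega>) (f \<omega>) \<le> fib_rho0 (N \<omega>) (s \<omega>) (t k \<omega>) + fib_rho0 (N \<omega>) (t k \<omega>) (f \<omega>)"
          using elim by (intro rho_tri[OF fN']) auto
        moreover have "fib_rho0 (N \<omega>) (s \<omega>) (t k \<omega>) \<le> fib_rho0 (N \<omega>) (s \<omega>) (f \<omega>) + fib_rho0 (N \<omega>) (f \<omega>) (t k \<omega>)"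
          using elim by (intro rho_tri[OF fN']) auto
        moreover have "fib_rho0 (N \<omega>) (f \<omega>) (t k \<omega>) = fib_rho0 (N \<omega>) (t k \<omega>) (f \<omega>)" by (rule rho_sym)
        ultimately show "\<bar>fib_rho0 (N \<omega>) (s \<omega>) (t k \<omega>) - fib_rho0 (N \<omega>) (s \<omega>) (f \<omega>)\<bar> \<le> fib_rho0 (N \<omega>) (t k \<omega>) (f \<omega>)"
          by linarith
      qed
    qed
  qed
qed

lemma L0_lim:
  fixes F :: "nat \<Rightarrow> 'w \<Rightarrow> 'x \<Rightarrow> real"
  assumes F: "\<And>n. L0_meas_sec M N L (F n)"
    and G: "AE \<omega> in M. G \<omega> \<in> borel_measurable (N \<omega>)"
    and c: "AE \<omega> in M. AE x in N \<omega>. (\<lambda>n. F n \<omega> x) \<longlonglongrightarrow> G \<omega> x"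
  shows "L0_meas_sec M N L G"
proof -
  interpret fM: finite_measure M by (rule fm)
  have "\<forall>n. \<exists>sn :: nat \<Rightarrow> 'w \<Rightarrow> 'x \<Rightarrow> real. (\<forall>k. L0_step_sec M N L (sn k)) \<and>
      (AE \<omega> in M. (\<lambda>k. fib_rho0 (N \<omega>) (sn k \<omega>) (F n \<omega>)) \<longlonglongrightarrow> 0)"
    using L0_meas_secD[OF F] by blast
  from choice[OF this] obtain s :: "nat \<Rightarrow> nat \<Rightarrow> 'w \<Rightarrow> 'x \<Rightarrow> real" where
    s: "\<forall>n. (\<forall>k. L0_step_sec M N L (s n k)) \<and>
      (AE \<omega> in M. (\<lambda>k. fib_rho0 (N \<omega>) (s n k \<omega>) (F n \<omega>)) \<longlonglongrightarrow> 0)"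
    by blast
  have s1: "\<And>n k. L0_step_sec M N L (s n k)" using s by blast
  have s2: "\<And>n. AE \<omega> in M. (\<lambda>k. fib_rho0 (N \<omega>) (s n k \<omega>) (F n \<omega>)) \<longlonglongrightarrow> 0" using s by blast
  have "\<forall>n. \<exists>Hn. \<forall>k. Hn k \<in> borel_measurable M \<and> (AE \<omega> in M. fib_rho0 (N \<omega>) (s n k \<omega>) (F n \<omega>) = Hn k \<omega>)"
  proof
    fix n
    have "\<forall>k. \<exists>g. g \<in> borel_measurable M \<and> (AE \<omega> in M. fib_rho0 (N \<omega>) (s n k \<omega>) (F n \<omega>) = g \<omega>)"
      using rho_aem[OF s1 F] unfolding aem_def by blast
    from choice[OF this] show "\<exists>Hn. \<forall>k. Hn k \<in> borel_measurable M \<and> (AE \<omega> in M. fib_rho0 (N \<omega>) (s n k \<omega>) (F n \<omega>) = Hn k \<omega>)" .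
  qed
  from choice[OF this] obtain H where
    H: "\<forall>n k. H n k \<in> borel_measurable M \<and> (AE \<omega> in M. fib_rho0 (N \<omega>) (s n k \<omega>) (F n \<omega>) = H n k \<omega>)"
    by blast
  have Hm: "\<And>n k. H n k \<in> borel_measurable M" using H by blast
  have He: "\<And>n k. AE \<omega> in M. fib_rho0 (N \<omega>) (s n k \<omega>) (F n \<omega>) = H n k \<omega>" using H by blast
  have He': "AE \<omega> in M. \<forall>n k. fib_rho0 (N \<omega>) (s n k \<omega>) (F n \<omega>) = H n k \<omega>"
    using He by (simp add: AE_all_countable)
  define q where "q n k \<omega> = min 1 \<bar>H n k \<omega>\<bar>" for n k \<omega>
  have qm: "q n k \<in> borel_measurable M" for n k unfolding q_def using Hm by measurable
  have qb: "0 \<le> q n k \<omega>" "q n k \<omega> \<le> 1" for n k \<omega> unfolding q_def by auto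
  have qi: "integrable M (q n k)" for n k
    by (rule fM.integrable_const_bound[where B=1]) (use qb qm in auto)
  have qlim: "(\<lambda>k. \<integral>\<omega>. q n k \<omega> \<partial>M) \<longlonglongrightarrow> (\<integral>\<omega>. 0 \<partial>M)" for n
  proof (rule integral_dominated_convergence[where w="\<lambda>_. 1"])
    show "AE \<omega> in M. (\<lambda>k. q n k \<omega>) \<longlonglongrightarrow> 0"
      using He' s2[of n]
    proof eventually_elim
      case (elim \<omega>)
      then have "(\<lambda>k. H n k \<omega>) \<longlonglongrightarrow> 0" by simp
      then have "(\<lambda>k. min 1 \<bar>H n k \<omega>\<bar>) \<longlonglongrightarrow> min 1 \<bar>0\<bar>"
        by (intro tendsto_min tendsto_const tendsto_rabs)
      then show ?case unfolding q_def by simp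
    qed
  qed (use qm qb in auto)
  have "\<forall>n. \<exists>k. (\<integral>\<omega>. q n k \<omega> \<partial>M) < (1/2)^n"
  proof
    fix n
    have "eventually (\<lambda>k. (\<integral>\<omega>. q n k \<omega> \<partial>M) < (1/2)^n) sequentially"
      using order_tendstoD(2)[OF qlim[of n], of "(1/2)^n"] by simp
    then show "\<exists>k. (\<integral>\<omega>. q n k \<omega> \<partial>M) < (1/2)^n"
      unfolding eventually_sequentially by blast
  qed
  from choice[OF this] obtain \<kappa> where \<kappa>': "\<forall>n. (\<integral>\<omega>. q n (\<kappa> n) \<omega> \<partial>M) < (1/2)^n" by blast
  have \<kappa>: "\<And>n. (\<integral>\<omega>. q n (\<kappa> n) \<omega> \<partial>M) < (1/2)^n" using \<kappa>' by blast
  define r where "r n \<omega> = q n (\<kappa> n) \<omega>" for n \<omega>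
  have rsum: "summable (\<lambda>n. \<integral>\<omega>. r n \<omega> \<partial>M)"
  proof (rule summable_comparison_test[OF _ summable_geometric[of "1/2::real"]])
    show "\<exists>N. \<forall>n\<ge>N. norm (\<integral>\<omega>. r n \<omega> \<partial>M) \<le> (1/2)^n"
      using \<kappa> qb unfolding r_def by (intro exI[of _ 0] allI impI) (auto intro!: integral_nonneg_AE less_imp_le)
  qed simp
  have rm: "\<And>n. r n \<in> borel_measurable M" unfolding r_def using qm by simp
  have "(\<integral>\<^sup>+ \<omega>. (\<Sum>n. ennreal (r n \<omega>)) \<partial>M) = (\<Sum>n. \<integral>\<^sup>+ \<omega>. ennreal (r n \<omega>) \<partial>M)"
    by (rule nn_integral_suminf) (use rm in measurable)
  also have "\<dots> = (\<Sum>n. ennreal (\<integral>\<omega>. r n \<omega> \<partial>M))"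
    using qi qb unfolding r_def by (subst nn_integral_eq_integral) auto
  also have "\<dots> \<noteq> \<infinity>"
  proof -
    have "(\<Sum>n. ennreal (\<integral>\<omega>. r n \<omega> \<partial>M)) \<noteq> top"
      using rsum qb unfolding r_def by (intro ennreal_suminf_neq_top) (auto intro!: integral_nonneg_AE)
    then show ?thesis by simp
  qed
  finally have "(\<integral>\<^sup>+ \<omega>. (\<Sum>n. ennreal (r n \<omega>)) \<partial>M) \<noteq> \<infinity>" .
  then have "AE \<omega> in M. (\<Sum>n. ennreal (r n \<omega>)) \<noteq> \<infinity>"
    by (intro nn_integral_PInf_AE) (use rm in measurable)
  then have rl: "AE \<omega> in M. (\<lambda>n. r n \<omega>) \<longlonglongrightarrow> 0"
  proof eventually_elim
    case (elim \<omega>)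
    then have "summable (\<lambda>n. r n \<omega>)" using qb unfolding r_def by (intro summable_suminf_not_top) auto
    then show ?case by (rule summable_LIMSEQ_zero)
  qed
  define \<sigma> where "\<sigma> n = s n (\<kappa> n)" for n
  have \<sigma>1: "\<And>n. L0_step_sec M N L (\<sigma> n)" unfolding \<sigma>_def by (rule s1)
  have \<sigma>m: "AE \<omega> in M. \<forall>n. \<sigma> n \<omega> \<in> borel_measurable (N \<omega>)"
    using L0_step_meas[OF \<sigma>1] by (simp add: AE_all_countable)
  have Fm: "AE \<omega> in M. \<forall>n. F n \<omega> \<in> borel_measurable (N \<omega>)"
    using L0_meas_sec_meas[OF F] by (simp add: AE_all_countable)
  have "AE \<omega> in M. \<omega> \<in> space M" by (rule AE_I2)
  then have conv: "AE \<omega> in M. (\<lambda>n. fib_rho0 (N \<omega>) (\<sigma> n \<omega>) (G \<omega>)) \<longlonglongrightarrow> 0"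
    using rl He' \<sigma>m Fm G c
  proof eventually_elim
    case (elim \<omega>)
    note fN' = fN[OF elim(1)]
    have a: "(\<lambda>n. fib_rho0 (N \<omega>) (\<sigma> n \<omega>) (F n \<omega>)) \<longlonglongrightarrow> 0"
    proof (rule minlim)
      have "(\<lambda>n. min 1 \<bar>fib_rho0 (N \<omega>) (\<sigma> n \<omega>) (F n \<omega>)\<bar>) = (\<lambda>n. r n \<omega>)"
        using elim(3) unfolding r_def q_def \<sigma>_def by simp
      then show "(\<lambda>n. min 1 \<bar>fib_rho0 (N \<omega>) (\<sigma> n \<omega>) (F n \<omega>)\<bar>) \<longlonglongrightarrow> 0" using elim(2) by simp
    qed
    have b: "(\<lambda>n. fib_rho0 (N \<omega>) (F n \<omega>) (G \<omega>)) \<longlonglongrightarrow> 0"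
      by (rule rho_lim[OF fN']) (use elim in auto)
    have "(\<lambda>n. fib_rho0 (N \<omega>) (\<sigma> n \<omega>) (F n \<omega>) + fib_rho0 (N \<omega>) (F n \<omega>) (G \<omega>)) \<longlonglongrightarrow> 0 + 0"
      by (rule tendsto_add[OF a b])
    then show ?case
      by (intro squeeze0[OF rho_nonneg rho_tri[OF fN']]) (use elim in auto)
  qed
  show ?thesis unfolding L0_meas_sec_def
    by (intro conjI exI[where x=\<sigma>] allI) (use G \<sigma>1 conv in auto)
qed

lemma L0_lip:
  fixes \<Phi> :: "real \<Rightarrow> real \<Rightarrow> real"
  assumes F: "L0_meas_sec M N L f" and G: "L0_meas_sec M N L g"
    and lip: "\<And>a b a' b'. \<bar>\<Phi> a b - \<Phi> a' b'\<bar> \<le> \<bar>a - a'\<bar> + \<bar>b - b'\<bar>"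
    and cont: "continuous_on UNIV (\<lambda>p. \<Phi> (fst p) (snd p))"
  shows "L0_meas_sec M N L (\<lambda>\<omega> x. \<Phi> (f \<omega> x) (g \<omega> x))"
proof -
  obtain s :: "nat \<Rightarrow> _" where s: "AE \<omega> in M. f \<omega> \<in> borel_measurable (N \<omega>)" "\<forall>k. L0_step_sec M N L (s k)"
    "AE \<omega> in M. (\<lambda>k. fib_rho0 (N \<omega>) (s k \<omega>) (f \<omega>)) \<longlonglongrightarrow> 0"
    using L0_meas_secD[OF F] by blast
  obtain t :: "nat \<Rightarrow> _" where t: "AE \<omega> in M. g \<omega> \<in> borel_measurable (N \<omega>)" "\<forall>k. L0_step_sec M N L (t k)"
    "AE \<omega> in M. (\<lambda>k. fib_rho0 (N \<omega>) (t k \<omega>) (g \<omega>)) \<longlonglongrightarrow> 0"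
    using L0_meas_secD[OF G] by blast
  have "\<forall>k. \<exists>u. L0_step_sec M N L u \<and> (\<forall>\<omega>\<in>space M. \<forall>x\<in>space (N \<omega>). u \<omega> x = \<Phi> (s k \<omega> x) (t k \<omega> x))"
  proof
    fix k
    obtain n e h1 h2 where r: "\<forall>i<n. meas_sec M N L (e i)"
      "\<forall>\<omega>\<in>space M. \<forall>x. s k \<omega> x = h1 (pat n e \<omega> x) \<and> t k \<omega> x = h2 (pat n e \<omega> x)"
      using L0_step_rep2[of "s k" "t k"] s(2) t(2) by blast
    obtain u where u: "L0_step_sec M N L u"
      "\<forall>\<omega>\<in>space M. \<forall>x\<in>space (N \<omega>). u \<omega> x = (\<lambda>S. \<Phi> (h1 S) (h2 S)) (pat n e \<omega> x)"
      using atom_step[OF r(1), of "\<lambda>S. \<Phi> (h1 S) (h2 S)"] by blast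
    show "\<exists>u. L0_step_sec M N L u \<and> (\<forall>\<omega>\<in>space M. \<forall>x\<in>space (N \<omega>). u \<omega> x = \<Phi> (s k \<omega> x) (t k \<omega> x))"
      using u r(2) by (intro exI[of _ u]) auto
  qed
  then obtain u where u1: "\<And>k. L0_step_sec M N L (u k)"
    and u2: "\<And>k. \<forall>\<omega>\<in>space M. \<forall>x\<in>space (N \<omega>). u k \<omega> x = \<Phi> (s k \<omega> x) (t k \<omega> x)"
    by metis
  have meas\<Phi>: "(\<lambda>x. \<Phi> (a x) (b x)) \<in> borel_measurable \<nu>"
    if "a \<in> borel_measurable \<nu>" "b \<in> borel_measurable \<nu>" for a b :: "'x \<Rightarrow> real" and \<nu>
    by (rule borel_measurable_continuous_Pair[OF that cont])
  have sm: "AE \<omega> in M. \<forall>k. s k \<omega> \<in> borel_measurable (N \<omega>)"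
    using s(2) L0_step_meas by (simp add: AE_all_countable)
  have tm: "AE \<omega> in M. \<forall>k. t k \<omega> \<in> borel_measurable (N \<omega>)"
    using t(2) L0_step_meas by (simp add: AE_all_countable)
  have "AE \<omega> in M. \<omega> \<in> space M" by (rule AE_I2)
  then have conv: "AE \<omega> in M. (\<lambda>k. fib_rho0 (N \<omega>) (u k \<omega>) (\<lambda>x. \<Phi> (f \<omega> x) (g \<omega> x))) \<longlonglongrightarrow> 0"
    using s(1,3) t(1,3) sm tm
  proof eventually_elim
    case (elim \<omega>)
    note fN' = fN[OF elim(1)]
    have "(\<lambda>k. fib_rho0 (N \<omega>) (s k \<omega>) (f \<omega>) + fib_rho0 (N \<omega>) (t k \<omega>) (g \<omega>)) \<longlonglongrightarrow> 0 + 0"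
      using elim by (intro tendsto_add) auto
    moreover have "fib_rho0 (N \<omega>) (u k \<omega>) (\<lambda>x. \<Phi> (f \<omega> x) (g \<omega> x)) \<le> fib_rho0 (N \<omega>) (s k \<omega>) (f \<omega>) + fib_rho0 (N \<omega>) (t k \<omega>) (g \<omega>)" for k
    proof -
      have "fib_rho0 (N \<omega>) (u k \<omega>) (\<lambda>x. \<Phi> (f \<omega> x) (g \<omega> x)) = fib_rho0 (N \<omega>) (\<lambda>x. \<Phi> (s k \<omega> x) (t k \<omega> x)) (\<lambda>x. \<Phi> (f \<omega> x) (g \<omega> x))"
        using u2[of k] elim(1) by (intro rho_cong_left) auto
      also have "\<dots> \<le> fib_rho0 (N \<omega>) (s k \<omega>) (f \<omega>) + fib_rho0 (N \<omega>) (t k \<omega>) (g \<omega>)"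
        using elim by (intro rho_le[OF fN'] meas\<Phi> ballI lip) auto
      finally show ?thesis .
    qed
    ultimately show ?case
      by (intro squeeze0[OF rho_nonneg]) auto
  qed
  have "AE \<omega> in M. (\<lambda>x. \<Phi> (f \<omega> x) (g \<omega> x)) \<in> borel_measurable (N \<omega>)"
    using s(1) t(1) by eventually_elim (rule meas\<Phi>)
  then show ?thesis unfolding L0_meas_sec_def
    by (intro conjI exI[where x=u] allI) (use u1 conv in auto)
qed

end

lemma dec_lim:
  fixes y :: "nat \<Rightarrow> real"
  assumes "\<forall>n. y (Suc n) \<le> y n" "\<forall>n. b \<le> y n"
  shows "y \<longlonglongrightarrow> lim y" "\<forall>n. lim y \<le> y n"
proof -
  have "decseq y" using assms(1) by (intro decseq_SucI) auto
  then obtain l where l: "y \<longlonglongrightarrow> l" "\<forall>i. l \<le> y i" using decseq_convergent assms(2) by blast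
  then have "lim y = l" using limI by blast
  then show "y \<longlonglongrightarrow> lim y" "\<forall>n. lim y \<le> y n" using l by auto
qed

lemma inc_lim:
  fixes y :: "nat \<Rightarrow> real"
  assumes "\<forall>n. y n \<le> y (Suc n)" "\<forall>n. y n \<le> b"
  shows "y \<longlonglongrightarrow> lim y" "\<forall>n. y n \<le> lim y"
proof -
  have "incseq y" using assms(1) by (intro incseq_SucI) auto
  then obtain l where l: "y \<longlonglongrightarrow> l" "\<forall>i. y i \<le> l" using incseq_convergent assms(2) by blast
  then have "lim y = l" using limI by blast
  then show "y \<longlonglongrightarrow> lim y" "\<forall>n. y n \<le> lim y" using l by auto
qed

lemma oconv_ae:
  fixes fs :: "nat \<Rightarrow> 'x \<Rightarrow> real"
  assumes "fib_oconv \<nu> fs g"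
  shows "AE x in \<nu>. (\<lambda>n. fs n x) \<longlonglongrightarrow> g x"
proof -
  obtain y where y1: "\<forall>n. y n \<in> borel_measurable \<nu>" and y2: "\<forall>n. AE x in \<nu>. y (Suc n) x \<le> y n x"
    and y3: "\<forall>k\<in>borel_measurable \<nu>. (\<forall>n. AE x in \<nu>. k x \<le> y n x) \<longrightarrow> (AE x in \<nu>. k x \<le> 0)"
    and y4: "\<forall>n. AE x in \<nu>. \<bar>fs n x - g x\<bar> \<le> y n x"
    using assms unfolding fib_oconv_def by blast
  have A: "AE x in \<nu>. (\<forall>n. y (Suc n) x \<le> y n x) \<and> (\<forall>n. \<bar>fs n x - g x\<bar> \<le> y n x)"
    using y2 y4 by (simp add: AE_all_countable)
  define z where "z x = lim (\<lambda>n. y n x)" for x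
  have zm: "z \<in> borel_measurable \<nu>" unfolding z_def by (rule borel_measurable_lim_metric) (use y1 in auto)
  have B: "AE x in \<nu>. (\<lambda>n. y n x) \<longlonglongrightarrow> z x \<and> (\<forall>n. z x \<le> y n x) \<and> 0 \<le> z x"
    using A
  proof eventually_elim
    case (elim x)
    have b: "\<forall>n. 0 \<le> y n x" using elim by (meson abs_ge_zero order_trans)
    note d = dec_lim[of "\<lambda>n. y n x" 0, OF _ b]
    have "(\<lambda>n. y n x) \<longlonglongrightarrow> z x" "\<forall>n. z x \<le> y n x" using d elim unfolding z_def by auto
    moreover have "0 \<le> z x" using LIMSEQ_le_const[OF \<open>(\<lambda>n. y n x) \<longlonglongrightarrow> z x\<close>] b by blast
    ultimately show ?case by blast
  qed
  have "\<forall>n. AE x in \<nu>. z x \<le> y n x" using B by (auto elim: AE_mp)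
  then have C: "AE x in \<nu>. z x \<le> 0" using y3 zm by blast
  show ?thesis using A B C
  proof eventually_elim
    case (elim x)
    then have z0: "z x = 0" by auto
    have "(\<lambda>n. \<bar>fs n x - g x\<bar>) \<longlonglongrightarrow> 0"
      by (rule squeeze0[where b="\<lambda>n. y n x"]) (use elim z0 in auto)
    then have "(\<lambda>n. fs n x - g x) \<longlonglongrightarrow> 0" by (rule tendsto_rabs_zero_cancel)
    then show ?case by (rule LIM_zero_cancel)
  qed
qed


context mbun
begin

lemma part1:
  fixes fs :: "nat \<Rightarrow> 'w \<Rightarrow> 'x \<Rightarrow> real"
  assumes ho: "hat_oconv M N L fs f"
  shows "AE \<omega> in M. fib_oconv (N \<omega>) (\<lambda>n. fs n \<omega>) (f \<omega>)"
proof -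
  obtain y where y1: "\<forall>n. L0_meas_sec M N L (y n)"
    and y2: "\<forall>n. AE \<omega> in M. AE x in N \<omega>. y (Suc n) \<omega> x \<le> y n \<omega> x"
    and y3: "\<forall>k. L0_meas_sec M N L k \<longrightarrow> (\<forall>n. AE \<omega> in M. AE x in N \<omega>. k \<omega> x \<le> y n \<omega> x) \<longrightarrow>
               (AE \<omega> in M. AE x in N \<omega>. k \<omega> x \<le> 0)"
    and y4: "\<forall>n. AE \<omega> in M. AE x in N \<omega>. \<bar>fs n \<omega> x - f \<omega> x\<bar> \<le> y n \<omega> x"
    using ho unfolding hat_oconv_def by blast
  have ym: "AE \<omega> in M. \<forall>n. y n \<omega> \<in> borel_measurable (N \<omega>)"
    using y1 L0_meas_sec_meas by (simp add: AE_all_countable)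
  have y2': "AE \<omega> in M. \<forall>n. AE x in N \<omega>. y (Suc n) \<omega> x \<le> y n \<omega> x"
    using y2 by (simp add: AE_all_countable)
  have y4': "AE \<omega> in M. \<forall>n. AE x in N \<omega>. \<bar>fs n \<omega> x - f \<omega> x\<bar> \<le> y n \<omega> x"
    using y4 by (simp add: AE_all_countable)
  have A: "AE \<omega> in M. AE x in N \<omega>. (\<forall>n. y (Suc n) \<omega> x \<le> y n \<omega> x) \<and> (\<forall>n. \<bar>fs n \<omega> x - f \<omega> x\<bar> \<le> y n \<omega> x)"
    using y2' y4' by eventually_elim (simp add: AE_all_countable AE_conj_iff)
  define z where "z \<omega> x = lim (\<lambda>n. y n \<omega> x)" for \<omega> x
  have zm: "AE \<omega> in M. z \<omega> \<in> borel_measurable (N \<omega>)"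
    using ym by eventually_elim (unfold z_def, rule borel_measurable_lim_metric, auto)
  have B: "AE \<omega> in M. AE x in N \<omega>. (\<lambda>n. y n \<omega> x) \<longlonglongrightarrow> z \<omega> x \<and> (\<forall>n. z \<omega> x \<le> y n \<omega> x)"
    using A
  proof eventually_elim
    case (elim \<omega>)
    then show ?case
    proof eventually_elim
      case (elim x)
      have b: "\<forall>n. 0 \<le> y n \<omega> x" using elim by (meson abs_ge_zero order_trans)
      note d = dec_lim[of "\<lambda>n. y n \<omega> x" 0, OF _ b]
      show ?case using d elim unfolding z_def by auto
    qed
  qed
  have zL: "L0_meas_sec M N L z"
  proof (rule L0_lim[where F=y])
    show "\<And>n. L0_meas_sec M N L (y n)" using y1 by blast
    show "AE \<omega> in M. z \<omega> \<in> borel_measurable (N \<omega>)" by (rule zm)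
    show "AE \<omega> in M. AE x in N \<omega>. (\<lambda>n. y n \<omega> x) \<longlonglongrightarrow> z \<omega> x"
      using B by eventually_elim (auto elim: AE_mp)
  qed
  have "\<forall>n. AE \<omega> in M. AE x in N \<omega>. z \<omega> x \<le> y n \<omega> x"
    using B by (auto elim!: AE_mp)
  then have C: "AE \<omega> in M. AE x in N \<omega>. z \<omega> x \<le> 0" using y3 zL by blast
  show ?thesis using ym y2' y4' B C
  proof eventually_elim
    case (elim \<omega>)
    show ?case unfolding fib_oconv_def
    proof (intro exI[where x="\<lambda>n. y n \<omega>"] conjI ballI impI)
      show "\<forall>n. y n \<omega> \<in> borel_measurable (N \<omega>)" using elim by blast
      show "\<forall>n. AE x in N \<omega>. y (Suc n) \<omega> x \<le> y n \<omega> x" using elim by blast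
      show "\<forall>n. AE x in N \<omega>. \<bar>fs n \<omega> x - f \<omega> x\<bar> \<le> y n \<omega> x" using elim by blast
      fix k assume "k \<in> borel_measurable (N \<omega>)" "\<forall>n. AE x in N \<omega>. k x \<le> y n \<omega> x"
      then have "AE x in N \<omega>. \<forall>n. k x \<le> y n \<omega> x" by (simp add: AE_all_countable)
      then show "AE x in N \<omega>. k x \<le> 0" using elim(4,5)
      proof eventually_elim
        case (elim x)
        then have "k x \<le> z \<omega> x" by (intro LIMSEQ_le_const[where X="\<lambda>n. y n \<omega> x"]) auto
        then show ?case using elim by linarith
      qed
    qed
  qed
qed

lemma part2:
  fixes fs :: "nat \<Rightarrow> 'w \<Rightarrow> 'x \<Rightarrow> real"
  assumes fs_meas: "\<And>n. L0_meas_sec M N L (fs n)"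
    and H: "AE \<omega> in M. g \<omega> \<in> borel_measurable (N \<omega>) \<and> fib_oconv (N \<omega>) (\<lambda>n. fs n \<omega>) (g \<omega>)"
  shows "L0_meas_sec M N L g \<and> hat_oconv M N L fs g"
proof -
  have c: "AE \<omega> in M. AE x in N \<omega>. (\<lambda>n. fs n \<omega> x) \<longlonglongrightarrow> g \<omega> x"
    using H by eventually_elim (auto intro: oconv_ae)
  have gm: "AE \<omega> in M. g \<omega> \<in> borel_measurable (N \<omega>)" using H by eventually_elim auto
  have gL: "L0_meas_sec M N L g" by (rule L0_lim[OF fs_meas gm c])
  define D where "D m \<omega> x = \<bar>fs m \<omega> x - g \<omega> x\<bar>" for m \<omega> x
  have DL: "L0_meas_sec M N L (D m)" for m
  proof -
    have "L0_meas_sec M N L (\<lambda>\<omega> x. (\<lambda>a b. \<bar>a - b\<bar>) (fs m \<omega> x) (g \<omega> x))"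
    proof (rule L0_lip[OF fs_meas gL])
      show "\<bar>\<bar>a - b\<bar> - \<bar>a' - b'\<bar>\<bar> \<le> \<bar>a - a'\<bar> + \<bar>b - b'\<bar>" for a b a' b' :: real by arith
      show "continuous_on UNIV (\<lambda>p. \<bar>fst p - snd p\<bar> :: real)" by (intro continuous_intros)
    qed
    then show ?thesis unfolding D_def by simp
  qed
  define Y where "Y n K \<omega> x = Max ((\<lambda>m. D m \<omega> x) ` {n..n+K})" for n K \<omega> x
  have Y0: "Y n 0 = D n" for n unfolding Y_def by (auto simp: fun_eq_iff)
  have YS: "Y n (Suc K) = (\<lambda>\<omega> x. max (D (n + Suc K) \<omega> x) (Y n K \<omega> x))" for n K
  proof -
    have "{n..n + Suc K} = insert (n + Suc K) {n..n+K}" by auto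
    then show ?thesis unfolding Y_def by (auto simp: fun_eq_iff Max_insert)
  qed
  have YL: "L0_meas_sec M N L (Y n K)" for n K
  proof (induction K)
    case 0
    then show ?case using DL Y0 by simp
  next
    case (Suc K)
    have "L0_meas_sec M N L (\<lambda>\<omega> x. max (D (n + Suc K) \<omega> x) (Y n K \<omega> x))"
    proof (rule L0_lip[OF DL Suc.IH, of max])
      show "\<bar>max a b - max a' b'\<bar> \<le> \<bar>a - a'\<bar> + \<bar>b - b'\<bar>" for a b a' b' :: real
        by (simp add: max_def) arith
      show "continuous_on UNIV (\<lambda>p. max (fst p) (snd p) :: real)" by (intro continuous_intros)
    qed
    then show ?case using YS by simp
  qed
  have Ya: "D m \<omega> x \<le> Y n K \<omega> x" if "n \<le> m" "m \<le> n + K" for n m K \<omega> x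
    unfolding Y_def using that by (intro Max_ge) auto
  have Yb: "Y n K \<omega> x \<le> e" if "\<forall>m\<ge>n. D m \<omega> x \<le> e" for n K \<omega> x e
    unfolding Y_def using that by (subst Max_le_iff) auto
  have Yc: "Y n K \<omega> x \<le> Y n (Suc K) \<omega> x" for n K \<omega> x
    unfolding Y_def by (intro Max_mono) auto
  have Yd: "Y (Suc n) K \<omega> x \<le> Y n (Suc K) \<omega> x" for n K \<omega> x
    unfolding Y_def by (intro Max_mono) auto
  define y where "y n \<omega> x = lim (\<lambda>K. Y n K \<omega> x)" for n \<omega> x
  have good: "(\<lambda>K. Y n K \<omega> x) \<longlonglongrightarrow> y n \<omega> x \<and> (\<forall>K. Y n K \<omega> x \<le> y n \<omega> x)"
    if "(\<lambda>m. fs m \<omega> x) \<longlonglongrightarrow> g \<omega> x" for n \<omega> x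
  proof -
    have "(\<lambda>m. fs m \<omega> x - g \<omega> x) \<longlonglongrightarrow> g \<omega> x - g \<omega> x" by (intro tendsto_intros that)
    then have "(\<lambda>m. D m \<omega> x) \<longlonglongrightarrow> \<bar>g \<omega> x - g \<omega> x\<bar>" unfolding D_def by (rule tendsto_rabs)
    then have "convergent (\<lambda>m. D m \<omega> x)" by (auto simp: convergent_def)
    then have "Bseq (\<lambda>m. D m \<omega> x)" by (rule convergent_imp_Bseq)
    then obtain B where B: "\<forall>m. norm (D m \<omega> x) \<le> B" unfolding Bseq_def by blast
    have "\<forall>m\<ge>n. D m \<omega> x \<le> B"
    proof (intro allI impI)
      fix m
      have "\<bar>D m \<omega> x\<bar> \<le> B" using B by simp
      moreover have "D m \<omega> x \<le> \<bar>D m \<omega> x\<bar>" by (rule abs_ge_self)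
      ultimately show "D m \<omega> x \<le> B" by linarith
    qed
    then have bnd: "\<forall>K. Y n K \<omega> x \<le> B" using Yb by blast
    note i = inc_lim[of "\<lambda>K. Y n K \<omega> x" B, OF _ bnd]
    show ?thesis using i Yc unfolding y_def by auto
  qed
  have Ym: "AE \<omega> in M. \<forall>n K. Y n K \<omega> \<in> borel_measurable (N \<omega>)"
    using L0_meas_sec_meas[OF YL] by (simp add: AE_all_countable)
  have yL: "L0_meas_sec M N L (y n)" for n
  proof (rule L0_lim[where F="Y n"])
    show "\<And>K. L0_meas_sec M N L (Y n K)" by (rule YL)
    show "AE \<omega> in M. y n \<omega> \<in> borel_measurable (N \<omega>)"
      using Ym by eventually_elim (unfold y_def, rule borel_measurable_lim_metric, auto)
    show "AE \<omega> in M. AE x in N \<omega>. (\<lambda>K. Y n K \<omega> x) \<longlonglongrightarrow> y n \<omega> x"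
      using c by eventually_elim (auto elim!: AE_mp dest: good)
  qed
  have "hat_oconv M N L fs g"
    unfolding hat_oconv_def
  proof (intro exI[where x=y] conjI allI impI)
    show "\<And>n. L0_meas_sec M N L (y n)" by (rule yL)
    show "AE \<omega> in M. AE x in N \<omega>. y (Suc n) \<omega> x \<le> y n \<omega> x" for n
      using c
    proof eventually_elim
      case (elim \<omega>)
      then show ?case
      proof eventually_elim
        case (elim x)
        have a: "(\<lambda>K. Y (Suc n) K \<omega> x) \<longlonglongrightarrow> y (Suc n) \<omega> x" using good[OF elim] by blast
        have b: "(\<lambda>K. Y n (Suc K) \<omega> x) \<longlonglongrightarrow> y n \<omega> x" using good[OF elim] LIMSEQ_Suc by blast
        show ?case by (rule LIMSEQ_le[OF a b]) (use Yd in auto)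
      qed
    qed
    show "AE \<omega> in M. AE x in N \<omega>. \<bar>fs n \<omega> x - g \<omega> x\<bar> \<le> y n \<omega> x" for n
      using c
    proof eventually_elim
      case (elim \<omega>)
      then show ?case
      proof eventually_elim
        case (elim x)
        have "D n \<omega> x \<le> Y n 0 \<omega> x" by (rule Ya) auto
        also have "\<dots> \<le> y n \<omega> x" using good[OF elim] by blast
        finally show ?case unfolding D_def .
      qed
    qed
    fix k assume kL: "L0_meas_sec M N L k" and kle: "\<forall>n. AE \<omega> in M. AE x in N \<omega>. k \<omega> x \<le> y n \<omega> x"
    have "AE \<omega> in M. \<forall>n. AE x in N \<omega>. k \<omega> x \<le> y n \<omega> x" using kle by (simp add: AE_all_countable)
    then show "AE \<omega> in M. AE x in N \<omega>. k \<omega> x \<le> 0"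
      using c
    proof eventually_elim
      case (elim \<omega>)
      then have "AE x in N \<omega>. (\<forall>n. k \<omega> x \<le> y n \<omega> x) \<and> (\<lambda>m. fs m \<omega> x) \<longlonglongrightarrow> g \<omega> x"
        by (simp add: AE_all_countable)
      then show ?case
      proof eventually_elim
        case (elim x)
        show ?case
        proof (rule field_le_epsilon)
          fix e :: real assume e: "0 < e"
          have "(\<lambda>m. fs m \<omega> x - g \<omega> x) \<longlonglongrightarrow> g \<omega> x - g \<omega> x" using elim by (intro tendsto_intros) auto
          then have "(\<lambda>m. D m \<omega> x) \<longlonglongrightarrow> \<bar>g \<omega> x - g \<omega> x\<bar>" unfolding D_def by (rule tendsto_rabs)
          then have "eventually (\<lambda>m. D m \<omega> x < e) sequentially"
            using order_tendstoD(2)[of _ 0 _ e] e by simp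
          then obtain Nn where Nn: "\<forall>m\<ge>Nn. D m \<omega> x < e" unfolding eventually_sequentially by blast
          then have "\<forall>m\<ge>Nn. D m \<omega> x \<le> e" by (simp add: less_imp_le)
          then have "\<forall>K. Y Nn K \<omega> x \<le> e" using Yb[of Nn \<omega> x e] by blast
          then have "y Nn \<omega> x \<le> e"
            using good[OF conjunct2[OF elim], of Nn] by (intro LIMSEQ_le_const2[where X="\<lambda>K. Y Nn K \<omega> x"]) auto
          then show "k \<omega> x \<le> 0 + e" using elim by (smt (verit))
        qed
      qed
    qed
  qed
  then show ?thesis using gL by blast
qed

end

theorem corollary3p3:
  fixes M :: "'w measure" and N :: "'w \<Rightarrow> 'x measure" and L :: "('w \<Rightarrow> 'x set) set"
    and fs :: "nat \<Rightarrow> 'w \<Rightarrow> 'x \<Rightarrow> real"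
  assumes mb: "meas_bundle M N L"
    and fs_meas: "\<And>n. L0_meas_sec M N L (fs n)"
  shows "(\<forall>f. L0_meas_sec M N L f \<longrightarrow> hat_oconv M N L fs f \<longrightarrow>
            (AE \<omega> in M. fib_oconv (N \<omega>) (\<lambda>n. fs n \<omega>) (f \<omega>)))
       \<and> (\<forall>g. (AE \<omega> in M. g \<omega> \<in> borel_measurable (N \<omega>) \<and> fib_oconv (N \<omega>) (\<lambda>n. fs n \<omega>) (g \<omega>)) \<longrightarrow>
            L0_meas_sec M N L g \<and> hat_oconv M N L fs g)"
proof -
  interpret mbun M N L by (rule mbun.intro[OF mb])
  show ?thesis
  proof (intro conjI allI impI)
    fix f assume "L0_meas_sec M N L f" "hat_oconv M N L fs f"
    then show "AE \<omega> in M. fib_oconv (N \<omega>) (\<lambda>n. fs n \<omega>) (f \<omega>)" by (intro part1)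
  next
    fix g assume "AE \<omega> in M. g \<omega> \<in> borel_measurable (N \<omega>) \<and> fib_oconv (N \<omega>) (\<lambda>n. fs n \<omega>) (g \<omega>)"
    then have "L0_meas_sec M N L g \<and> hat_oconv M N L fs g" by (rule part2[OF fs_meas])
    then show "L0_meas_sec M N L g" "hat_oconv M N L fs g" by auto
  qed
qed

end
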